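(* Let $M_1,M_2$ be binary matroids with common triangle $T=E(M_1)\cap E(M_2)$, where $T$ contains no cocircuit of $M_1$ or of $M_2$, and let $M=M_1\oplus_3M_2$. Then: (i) every cocircuit $C^*$ of $M$ is either a cocircuit of $M_1$ or of $M_2$ disjoint from $T$, or is of the form $C_1^*\triangle C_2^*$ where $C_i^*$ is a cocircuit of $M_i$ ($i=1,2$) and $C_1^*\cap T=C_2^*\cap T$ has exactly two elements; (ii) every cocircuit of $M_1$ or of $M_2$ disjoint from $T$ is a cocircuit of $M$; and if $C_i^*$ is a cocircuit of $M_i$ ($i=1,2$) with $C_1^*\cap T=C_2^*\cap T$ of size exactly two, then either $C_1^*\triangle C_2^*$ is a cocircuit of $M$, or $C_1^*\triangle C_2^*$ is the disjoint union of two cocircuits $R^*,Q^*$ of $M$, each of which meets both $E(M_1)$ and $E(M_2)$.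
   Context: If $M_1,M_2$ are binary matroids on $E_1,E_2$ with $E_1\cap E_2=T$ and $T$ a triangle of both, $P_T(M_1,M_2)$ denotes the generalized parallel connection across $T$: the matroid on $E_1\cup E_2$ whose flats are exactly the sets $F$ such that $F\cap E_i$ is a flat of $M_i$ for $i=1,2$. The 3-sum is $M_1\oplus_3 M_2=P_T(M_1,M_2)\setminus T$. $\triangle$ denotes symmetric difference. *)

theory Defs
  imports Main
begin

definition matroid :: "'a set \<Rightarrow> ('a set \<Rightarrow> bool) \<Rightarrow> bool" where
  "matroid E I \<longleftrightarrow> finite E \<and> I {} \<and> (\<forall>X. I X \<longrightarrow> X \<subseteq> E)
     \<and> (\<forall>X Y. I X \<and> Y \<subseteq> X \<longrightarrow> I Y)
     \<and> (\<forall>X Y. I X \<and> I Y \<and> card X < card Y \<longrightarrow> (\<exists>y\<in>Y - X. I (insert y X)))"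

text \<open>Binary = representable over GF(2): an indexed family of vectors in GF(2)^nat
  (vectors are maps nat to bool) such that X is independent iff X is a subset of E and
  the family restricted to X is linearly independent over GF(2), i.e. no nonempty
  subfamily sums to zero (the GF(2) sum of Y has i-th coordinate the parity of the
  number of y in Y with v y i).\<close>

definition binary :: "'a set \<Rightarrow> ('a set \<Rightarrow> bool) \<Rightarrow> bool" where
  "binary E I \<longleftrightarrow> (\<exists>v :: 'a \<Rightarrow> nat \<Rightarrow> bool. \<forall>X. I X \<longleftrightarrow>
      X \<subseteq> E \<and> (\<forall>Y\<subseteq>X. Y \<noteq> {} \<longrightarrow> (\<exists>i. odd (card {y\<in>Y. v y i}))))"

definition rk :: "('a set \<Rightarrow> bool) \<Rightarrow> 'a set \<Rightarrow> nat" where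
  "rk I X = Max (card ` {Y. Y \<subseteq> X \<and> I Y})"

definition is_flat :: "'a set \<Rightarrow> ('a set \<Rightarrow> bool) \<Rightarrow> 'a set \<Rightarrow> bool" where
  "is_flat E I F \<longleftrightarrow> F \<subseteq> E \<and> (\<forall>x\<in>E - F. rk I (insert x F) > rk I F)"

definition circuit :: "'a set \<Rightarrow> ('a set \<Rightarrow> bool) \<Rightarrow> 'a set \<Rightarrow> bool" where
  "circuit E I C \<longleftrightarrow> C \<subseteq> E \<and> \<not> I C \<and> (\<forall>x\<in>C. I (C - {x}))"

definition basis :: "'a set \<Rightarrow> ('a set \<Rightarrow> bool) \<Rightarrow> 'a set \<Rightarrow> bool" where
  "basis E I B \<longleftrightarrow> I B \<and> (\<forall>x\<in>E - B. \<not> I (insert x B))"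

definition dual_indep :: "'a set \<Rightarrow> ('a set \<Rightarrow> bool) \<Rightarrow> 'a set \<Rightarrow> bool" where
  "dual_indep E I X \<longleftrightarrow> X \<subseteq> E \<and> (\<exists>B. basis E I B \<and> X \<inter> B = {})"

definition cocircuit :: "'a set \<Rightarrow> ('a set \<Rightarrow> bool) \<Rightarrow> 'a set \<Rightarrow> bool" where
  "cocircuit E I C \<longleftrightarrow> circuit E (dual_indep E I) C"

definition triangle :: "'a set \<Rightarrow> ('a set \<Rightarrow> bool) \<Rightarrow> 'a set \<Rightarrow> bool" where
  "triangle E I T \<longleftrightarrow> circuit E I T \<and> card T = 3"

definition delete_indep :: "('a set \<Rightarrow> bool) \<Rightarrow> 'a set \<Rightarrow> 'a set \<Rightarrow> bool" where
  "delete_indep I D X \<longleftrightarrow> I X \<and> X \<inter> D = {}"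

definition symdiff :: "'a set \<Rightarrow> 'a set \<Rightarrow> 'a set" where
  "symdiff A B = (A - B) \<union> (B - A)"

end

theory Submission
  imports Defs
begin


definition hyp where "hyp E I H \<longleftrightarrow> is_flat E I H \<and> Suc (rk I H) = rk I E"
definition clo where "clo E I X = {x\<in>E. rk I (insert x X) = rk I X}"

lemma parity_aux: "(d::nat) + c = u \<Longrightarrow> u + c = p + q \<Longrightarrow> odd d = (odd p \<noteq> odd q)"
  by presburger

locale mat = fixes E :: "'a set" and I assumes m: "matroid E I"
begin

lemma finE: "finite E" using m unfolding matroid_def by blast
lemma ind_empty: "I {}" using m unfolding matroid_def by blast
lemma ind_sub: "I X \<Longrightarrow> X \<subseteq> E" using m unfolding matroid_def by blast
lemma ind_mono: "I X \<Longrightarrow> Y \<subseteq> X \<Longrightarrow> I Y" using m unfolding matroid_def by blast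
lemma aug: "I X \<Longrightarrow> I Y \<Longrightarrow> card X < card Y \<Longrightarrow> \<exists>y\<in>Y-X. I (insert y X)"
  using m unfolding matroid_def by blast

lemma ind_fin: "I X \<Longrightarrow> finite X" using finE ind_sub finite_subset by blast

lemma rk_set_fin: "finite {Y. Y \<subseteq> X \<and> I Y}"
  by (rule finite_subset[of _ "Pow E"]) (auto dest: ind_sub simp: finE)

lemma rk_ex: "\<exists>J. J \<subseteq> X \<and> I J \<and> card J = rk I X"
proof -
  have "card ` {Y. Y \<subseteq> X \<and> I Y} \<noteq> {}" using ind_empty by auto
  hence "rk I X \<in> card ` {Y. Y \<subseteq> X \<and> I Y}" unfolding rk_def using Max_in rk_set_fin by blast
  thus ?thesis by auto
qed

lemma rk_ge: "J \<subseteq> X \<Longrightarrow> I J \<Longrightarrow> card J \<le> rk I X"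
  unfolding rk_def using rk_set_fin by (auto intro: Max_ge)

lemma rk_mono: "X \<subseteq> Y \<Longrightarrow> rk I X \<le> rk I Y"
  using rk_ex[of X] rk_ge by (metis order_trans)

lemma rk_le_card: "finite X \<Longrightarrow> rk I X \<le> card X" using rk_ex[of X] card_mono by metis

lemma rk_ind: "I X \<Longrightarrow> rk I X = card X" using rk_ge[of X X] rk_le_card ind_fin by force

lemma rk_insert: "rk I (insert x X) \<le> Suc (rk I X)"
proof -
  obtain J where J: "J \<subseteq> insert x X" "I J" "card J = rk I (insert x X)" using rk_ex by blast
  have "J - {x} \<subseteq> X" "I (J - {x})" using J ind_mono by auto
  hence "card (J - {x}) \<le> rk I X" by (rule rk_ge)
  moreover have "card J \<le> Suc (card (J - {x}))" using ind_fin[OF J(2)]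
    by (cases "x \<in> J") (auto simp: card_Suc_Diff1)
  ultimately show ?thesis using J(3) by linarith
qed

lemma extend: assumes "I J" "J \<subseteq> X" shows "\<exists>J'. J \<subseteq> J' \<and> J' \<subseteq> X \<and> I J' \<and> card J' = rk I X"
proof -
  let ?S = "{J'. J \<subseteq> J' \<and> J' \<subseteq> X \<and> I J'}"
  have fin: "finite ?S" by (rule finite_subset[OF _ rk_set_fin[of X]]) auto
  have ne: "J \<in> ?S" using assms by auto
  let ?m = "Max (card ` ?S)"
  have "?m \<in> card ` ?S" using fin ne by (intro Max_in) auto
  then obtain J' where J': "J' \<in> ?S" "card J' = ?m" by auto
  have mx: "\<And>K. K \<in> ?S \<Longrightarrow> card K \<le> card J'" using J' fin by auto
  have "card J' = rk I X"
  proof (rule ccontr)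
    assume "card J' \<noteq> rk I X"
    hence lt: "card J' < rk I X" using rk_ge[of J' X] J' by auto
    obtain Y where Y: "Y \<subseteq> X" "I Y" "card Y = rk I X" using rk_ex by blast
    obtain y where y: "y \<in> Y - J'" "I (insert y J')" using aug[of J' Y] J' Y lt by auto
    have "insert y J' \<in> ?S" using y Y J' by auto
    hence "card (insert y J') \<le> card J'" by (rule mx)
    moreover have "card (insert y J') = Suc (card J')" using y ind_fin[OF y(2)] by auto
    ultimately show False by auto
  qed
  thus ?thesis using J' by auto
qed

lemma rk_ins_mono: assumes "X \<subseteq> Y" "rk I (insert x X) = rk I X" shows "rk I (insert x Y) = rk I Y"
proof (rule ccontr)
  assume ne: "rk I (insert x Y) \<noteq> rk I Y"
  have "rk I Y \<le> rk I (insert x Y)" by (rule rk_mono) auto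
  hence lt: "rk I Y < rk I (insert x Y)" using ne by auto
  obtain Jx where Jx: "Jx \<subseteq> X" "I Jx" "card Jx = rk I X" using rk_ex by blast
  obtain JY where JY: "Jx \<subseteq> JY" "JY \<subseteq> Y" "I JY" "card JY = rk I Y"
    using extend[of Jx Y] Jx assms(1) by blast
  obtain K where K: "K \<subseteq> insert x Y" "I K" "card K = rk I (insert x Y)" using rk_ex by blast
  obtain z where z: "z \<in> K - JY" "I (insert z JY)" using aug[OF JY(3) K(2)] lt JY(4) K(3) by auto
  show False
  proof (cases "z \<in> Y")
    case True
    hence "insert z JY \<subseteq> Y" using JY by auto
    hence "card (insert z JY) \<le> rk I Y" using rk_ge z by blast
    moreover have "card (insert z JY) = Suc (card JY)" using z ind_fin[OF JY(3)] by auto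
    ultimately show False using JY(4) by auto
  next
    case False
    hence zx: "z = x" using z K by auto
    have "I (insert x Jx)" using z zx JY(1) ind_mono by (metis insert_mono)
    moreover have "insert x Jx \<subseteq> insert x X" using Jx by auto
    ultimately have "card (insert x Jx) \<le> rk I (insert x X)" using rk_ge by blast
    moreover have "x \<notin> Jx" using z zx JY(1) by auto
    hence "card (insert x Jx) = Suc (card Jx)" using ind_fin[OF Jx(2)] by auto
    ultimately show False using Jx(3) assms(2) by auto
  qed
qed

abbreviation cl where "cl X \<equiv> clo E I X"

lemma cl_iff: "x \<in> cl X \<longleftrightarrow> x \<in> E \<and> rk I (insert x X) = rk I X" by (simp add: clo_def)

lemma flat_iff: "is_flat E I F \<longleftrightarrow> F \<subseteq> E \<and> (\<forall>x\<in>E-F. x \<notin> cl F)"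
proof -
  have m: "rk I F \<le> rk I (insert x F)" for x by (rule rk_mono) auto
  have "rk I F < rk I (insert x F) \<longleftrightarrow> rk I (insert x F) \<noteq> rk I F" for x
    using m[of x] by linarith
  thus ?thesis unfolding is_flat_def cl_iff by auto
qed

lemma cl_sub: "X \<subseteq> E \<Longrightarrow> X \<subseteq> cl X" by (auto simp: clo_def insert_absorb)
lemma cl_E: "cl X \<subseteq> E" by (auto simp: clo_def)

lemma rk_union_cl: "finite Y \<Longrightarrow> (\<forall>y\<in>Y. rk I (insert y X) = rk I X) \<Longrightarrow> rk I (X \<union> Y) = rk I X"
proof (induction Y rule: finite_induct)
  case empty show ?case by simp
next
  case (insert y Y)
  have "rk I (insert y (X \<union> Y)) = rk I (X \<union> Y)" using rk_ins_mono[of X "X \<union> Y" y] insert by auto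
  thus ?case using insert by simp
qed

lemma rk_cl: "X \<subseteq> E \<Longrightarrow> rk I (cl X) = rk I X"
proof -
  assume X: "X \<subseteq> E"
  have "cl X = X \<union> cl X" using cl_sub[OF X] by auto
  moreover have "finite (cl X)" using cl_E finE finite_subset by blast
  ultimately show ?thesis using rk_union_cl[of "cl X" X] cl_iff by auto
qed

lemma cl_flat: assumes X: "X \<subseteq> E" shows "is_flat E I (cl X)"
  unfolding flat_iff
proof (intro conjI ballI cl_E)
  fix x assume x: "x \<in> E - cl X"
  show "x \<notin> cl (cl X)"
  proof
    assume "x \<in> cl (cl X)"
    hence "rk I (insert x (cl X)) = rk I X" using rk_cl[OF X] cl_iff by auto
    moreover have "rk I (insert x X) \<le> rk I (insert x (cl X))" using cl_sub[OF X] by (intro rk_mono) auto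
    moreover have "rk I X \<le> rk I (insert x X)" by (intro rk_mono) auto
    ultimately have "x \<in> cl X" using x cl_iff by auto
    thus False using x by auto
  qed
qed

lemma cl_least: assumes F: "is_flat E I F" and X: "X \<subseteq> F" shows "cl X \<subseteq> F"
proof
  fix x assume x: "x \<in> cl X"
  hence "x \<in> E" "rk I (insert x X) = rk I X" using cl_iff by auto
  hence "x \<in> cl F" using rk_ins_mono[OF X] cl_iff by auto
  thus "x \<in> F" using F \<open>x \<in> E\<close> unfolding flat_iff by auto
qed

lemma cl_mono: "X \<subseteq> Y \<Longrightarrow> cl X \<subseteq> cl Y" by (auto simp: clo_def intro: rk_ins_mono)

lemma flat_cl_eq: assumes "is_flat E I F" shows "cl F = F"
proof
  show "cl F \<subseteq> F" using cl_least[OF assms] by auto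
  show "F \<subseteq> cl F" using assms cl_sub unfolding is_flat_def by auto
qed

lemma flat_rk_eq: assumes "is_flat E I F" "X \<subseteq> F" "rk I X = rk I F" shows "cl X = F"
proof
  show "cl X \<subseteq> F" using cl_least assms by blast
  show "F \<subseteq> cl X"
  proof
    fix y assume y: "y \<in> F"
    have "y \<in> E" using y assms(1) unfolding is_flat_def by auto
    moreover have "rk I (insert y X) \<le> rk I F" using y assms by (intro rk_mono) auto
    moreover have "rk I X \<le> rk I (insert y X)" by (intro rk_mono) auto
    ultimately show "y \<in> cl X" using assms(3) cl_iff by auto
  qed
qed

lemma flat_less: assumes "is_flat E I F" "is_flat E I G" "F \<subseteq> G" "F \<noteq> G" shows "rk I F < rk I G"
proof -
  obtain x where x: "x \<in> G" "x \<notin> F" using assms by auto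
  have "x \<in> E" using x assms(2) unfolding is_flat_def by auto
  hence "rk I F < rk I (insert x F)" using assms(1) x unfolding is_flat_def by auto
  moreover have "rk I (insert x F) \<le> rk I G" using x assms by (intro rk_mono) auto
  ultimately show ?thesis by auto
qed

lemma flat_E: "is_flat E I E" by (simp add: is_flat_def)

lemma flat_inter: "is_flat E I F \<Longrightarrow> is_flat E I G \<Longrightarrow> is_flat E I (F \<inter> G)"
  unfolding flat_iff using cl_mono[of "F \<inter> G" F] cl_mono[of "F \<inter> G" G] by blast

lemma circuit_flat: assumes C: "circuit E I C" "x \<in> C" and F: "is_flat E I F" "C - {x} \<subseteq> F"
  shows "x \<in> F"
proof -
  have CE: "C \<subseteq> E" "\<not> I C" "I (C - {x})" using C unfolding circuit_def by auto
  have fin: "finite C" using CE finE finite_subset by blast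
  have r1: "rk I (C - {x}) = card C - 1" using rk_ind[OF CE(3)] C(2) fin by simp
  obtain J where J: "J \<subseteq> C" "I J" "card J = rk I C" using rk_ex by blast
  have "J \<noteq> C" using J CE by auto
  hence "card J < card C" using J fin by (meson psubset_card_mono psubsetI)
  moreover have "rk I (C - {x}) \<le> rk I C" by (intro rk_mono) auto
  ultimately have "rk I (insert x (C - {x})) = rk I (C - {x})" using J r1 C(2) insert_Diff by fastforce
  hence "x \<in> cl (C - {x})" using CE C(2) cl_iff by auto
  thus ?thesis using cl_least[OF F] by auto
qed

lemma basis_rk: assumes "basis E I B" shows "card B = rk I E"
proof -
  have B: "I B" "\<forall>x\<in>E - B. \<not> I (insert x B)" using assms unfolding basis_def by auto
  have le: "card B \<le> rk I E" using rk_ge B ind_sub by blast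
  show ?thesis
  proof (rule ccontr)
    assume "card B \<noteq> rk I E"
    hence lt: "card B < rk I E" using le by auto
    obtain J where J: "J \<subseteq> E" "I J" "card J = rk I E" using rk_ex by blast
    obtain y where "y \<in> J - B" "I (insert y B)" using aug[OF B(1) J(2)] lt J by auto
    thus False using B J by auto
  qed
qed

lemma dual_indep_iff: "dual_indep E I X \<longleftrightarrow> X \<subseteq> E \<and> rk I (E - X) = rk I E"
proof
  assume "dual_indep E I X"
  then obtain B where B: "X \<subseteq> E" "basis E I B" "X \<inter> B = {}" unfolding dual_indep_def by auto
  have "B \<subseteq> E - X" using B ind_sub unfolding basis_def by auto
  hence "card B \<le> rk I (E - X)" using rk_ge B unfolding basis_def by auto
  moreover have "rk I (E - X) \<le> rk I E" by (intro rk_mono) auto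
  ultimately show "X \<subseteq> E \<and> rk I (E - X) = rk I E" using basis_rk[OF B(2)] B by auto
next
  assume A: "X \<subseteq> E \<and> rk I (E - X) = rk I E"
  obtain J where J: "J \<subseteq> E - X" "I J" "card J = rk I (E - X)" using rk_ex by blast
  have "basis E I J"
    unfolding basis_def
  proof (intro conjI ballI notI J(2))
    fix x assume x: "x \<in> E - J" "I (insert x J)"
    have "card (insert x J) \<le> rk I E" using rk_ge[OF _ x(2)] x J by auto
    moreover have "card (insert x J) = Suc (card J)" using x ind_fin[OF J(2)] by auto
    ultimately show False using J A by auto
  qed
  thus "dual_indep E I X" unfolding dual_indep_def using A J by auto
qed

lemma cocircuit_hyp: assumes CE: "C \<subseteq> E" shows "cocircuit E I C \<longleftrightarrow> hyp E I (E - C)"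
proof -
  have ins: "\<And>x. x \<in> C \<Longrightarrow> E - (C - {x}) = insert x (E - C)" using CE by auto
  have d1: "dual_indep E I C \<longleftrightarrow> rk I (E - C) = rk I E" using CE dual_indep_iff by simp
  have d2: "dual_indep E I (C - {x}) \<longleftrightarrow> rk I (insert x (E - C)) = rk I E" if x: "x \<in> C" for x
    using CE dual_indep_iff[of "C - {x}"] ins[OF x] by auto
  have coc: "cocircuit E I C \<longleftrightarrow> rk I (E - C) \<noteq> rk I E \<and> (\<forall>x\<in>C. rk I (insert x (E - C)) = rk I E)"
    unfolding cocircuit_def circuit_def using CE d1 d2 by blast
  have mE: "rk I (E - C) \<le> rk I E" by (rule rk_mono) auto
  show ?thesis
  proof
    assume c: "cocircuit E I C"
    hence lt: "rk I (E - C) < rk I E" using coc mE by auto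
    have fl: "is_flat E I (E - C)" unfolding is_flat_def
    proof (intro conjI ballI)
      fix x assume "x \<in> E - (E - C)"
      hence "x \<in> C" by auto
      thus "rk I (E - C) < rk I (insert x (E - C))" using coc c lt by auto
    qed auto
    have "C \<noteq> {}" using lt by auto
    then obtain x where x: "x \<in> C" by auto
    have "rk I (insert x (E - C)) = rk I E" using coc c x by auto
    hence "rk I E \<le> Suc (rk I (E - C))" using rk_insert[of x "E - C"] by auto
    thus "hyp E I (E - C)" unfolding hyp_def using fl lt by auto
  next
    assume h: "hyp E I (E - C)"
    have "rk I (E - C) \<noteq> rk I E" using h unfolding hyp_def by auto
    moreover have "\<forall>x\<in>C. rk I (insert x (E - C)) = rk I E"
    proof
      fix x assume x: "x \<in> C"
      have "x \<in> E - (E - C)" using x CE by auto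
      hence "rk I (E - C) < rk I (insert x (E - C))" using h unfolding hyp_def is_flat_def by blast
      moreover have "rk I (insert x (E - C)) \<le> rk I E" using x CE by (intro rk_mono) auto
      ultimately show "rk I (insert x (E - C)) = rk I E" using h unfolding hyp_def by auto
    qed
    ultimately show "cocircuit E I C" using coc by auto
  qed
qed

lemma flat_full: "is_flat E I F \<Longrightarrow> rk I F = rk I E \<Longrightarrow> F = E"
  using flat_less[OF _ flat_E, of F] unfolding is_flat_def by auto

lemma hyp_coatom: "hyp E I H \<longleftrightarrow> is_flat E I H \<and> H \<noteq> E \<and> (\<forall>G. is_flat E I G \<and> H \<subseteq> G \<longrightarrow> G = H \<or> G = E)"
proof
  assume h: "hyp E I H"
  have fl: "is_flat E I H" and r: "Suc (rk I H) = rk I E" using h unfolding hyp_def by auto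
  have "H \<noteq> E" using r by auto
  moreover have "\<forall>G. is_flat E I G \<and> H \<subseteq> G \<longrightarrow> G = H \<or> G = E"
  proof (intro allI impI)
    fix G assume G: "is_flat E I G \<and> H \<subseteq> G"
    show "G = H \<or> G = E"
    proof (cases "G = H")
      case False
      hence "rk I H < rk I G" using flat_less fl G by auto
      moreover have "rk I G \<le> rk I E" using G unfolding is_flat_def by (intro rk_mono) auto
      ultimately have "rk I G = rk I E" using r by auto
      thus ?thesis using flat_full G by auto
    qed auto
  qed
  ultimately show "is_flat E I H \<and> H \<noteq> E \<and> (\<forall>G. is_flat E I G \<and> H \<subseteq> G \<longrightarrow> G = H \<or> G = E)" using fl by auto
next
  assume A: "is_flat E I H \<and> H \<noteq> E \<and> (\<forall>G. is_flat E I G \<and> H \<subseteq> G \<longrightarrow> G = H \<or> G = E)"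
  have HE: "H \<subseteq> E" using A unfolding is_flat_def by auto
  then obtain x where x: "x \<in> E" "x \<notin> H" using A by auto
  have fl: "is_flat E I (cl (insert x H))" using cl_flat x HE by auto
  have sub: "insert x H \<subseteq> cl (insert x H)" by (rule cl_sub) (use x HE in auto)
  hence "cl (insert x H) = E" using A fl x by auto
  hence "rk I E = rk I (insert x H)" using rk_cl[of "insert x H"] x HE by auto
  moreover have "rk I H < rk I (insert x H)" using A x unfolding is_flat_def by auto
  ultimately show "hyp E I H" unfolding hyp_def using rk_insert[of x H] A by auto
qed

lemma hyp_eq: assumes "hyp E I F" "hyp E I G" "F \<subseteq> G" shows "F = G"
proof (rule ccontr)
  assume "F \<noteq> G"
  hence "rk I F < rk I G" using flat_less assms unfolding hyp_def by blast
  thus False using assms unfolding hyp_def by auto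
qed

lemma hyp_exists_aux: "\<forall>F. is_flat E I F \<and> F \<noteq> E \<and> rk I E - rk I F = n \<longrightarrow> (\<exists>H. hyp E I H \<and> F \<subseteq> H)"
proof (induction n)
  case 0
  show ?case
  proof (intro allI impI)
    fix F assume F: "is_flat E I F \<and> F \<noteq> E \<and> rk I E - rk I F = 0"
    have "F \<subseteq> E" using F unfolding is_flat_def by auto
    hence "rk I F < rk I E" using flat_less[OF _ flat_E] F by auto
    thus "\<exists>H. hyp E I H \<and> F \<subseteq> H" using F by auto
  qed
next
  case (Suc n)
  show ?case
  proof (intro allI impI)
    fix F assume F: "is_flat E I F \<and> F \<noteq> E \<and> rk I E - rk I F = Suc n"
    show "\<exists>H. hyp E I H \<and> F \<subseteq> H"
    proof (cases "Suc (rk I F) = rk I E")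
      case True thus ?thesis using F unfolding hyp_def by auto
    next
      case False
      have FE: "F \<subseteq> E" using F unfolding is_flat_def by auto
      then obtain x where x: "x \<in> E" "x \<notin> F" using F by auto
      let ?G = "cl (insert x F)"
      have fl: "is_flat E I ?G" using cl_flat x FE by auto
      have "rk I F < rk I (insert x F)" using F x unfolding is_flat_def by auto
      hence rG: "rk I ?G = Suc (rk I F)" using rk_cl[of "insert x F"] rk_insert[of x F] x FE by auto
      have "rk I ?G \<le> rk I E" using cl_E by (intro rk_mono)
      hence "rk I ?G < rk I E" using rG False by auto
      hence "?G \<noteq> E" by auto
      moreover have "rk I E - rk I ?G = n" using rG F by auto
      ultimately obtain H where "hyp E I H" "?G \<subseteq> H" using Suc.IH fl by blast
      moreover have "F \<subseteq> ?G" using cl_sub[of "insert x F"] x FE by auto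
      ultimately show ?thesis by auto
    qed
  qed
qed

lemma hyp_exists: "is_flat E I F \<Longrightarrow> F \<noteq> E \<Longrightarrow> \<exists>H. hyp E I H \<and> F \<subseteq> H"
  using hyp_exists_aux[of "rk I E - rk I F"] by blast


lemma binary_hyp_meets:
  assumes bin: "binary E I" and C: "circuit E I T" "card T = 3" and H: "hyp E I H"
  shows "H \<inter> T \<noteq> {}"
proof
  assume disj: "H \<inter> T = {}"
  obtain v :: "'a \<Rightarrow> nat \<Rightarrow> bool" where v: "\<forall>X. I X \<longleftrightarrow> X \<subseteq> E \<and> (\<forall>Y\<subseteq>X. Y \<noteq> {} \<longrightarrow> (\<exists>i. odd (card {y\<in>Y. v y i})))"
    using bin unfolding binary_def by blast
  define S where "S Y = (\<lambda>i. odd (card {y\<in>Y. v y i}))" for Y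
  have indS: "\<And>X. I X \<longleftrightarrow> X \<subseteq> E \<and> (\<forall>Y\<subseteq>X. Y \<noteq> {} \<longrightarrow> S Y \<noteq> (\<lambda>i. False))"
    using v unfolding S_def by (auto simp: fun_eq_iff)
  have Ssym: "S ((A - B) \<union> (B - A)) = (\<lambda>i. S A i \<noteq> S B i)" if f: "finite A" "finite B" for A B
    unfolding S_def
  proof (rule ext)
    fix i
    let ?A = "{y\<in>A. v y i}" let ?B = "{y\<in>B. v y i}"
    have e: "{y \<in> (A-B) \<union> (B-A). v y i} = (?A \<union> ?B) - (?A \<inter> ?B)" by auto
    have fa: "finite ?A" "finite ?B" using f by auto
    have c1: "card ((?A \<union> ?B) - (?A \<inter> ?B)) = card (?A \<union> ?B) - card (?A \<inter> ?B)"
      using fa by (intro card_Diff_subset) auto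
    have c2: "card (?A \<inter> ?B) \<le> card (?A \<union> ?B)" using fa by (intro card_mono) auto
    have "card ((?A \<union> ?B) - (?A \<inter> ?B)) + card (?A \<inter> ?B) = card (?A \<union> ?B)"
      using c1 c2 by linarith
    moreover have "card (?A \<union> ?B) + card (?A \<inter> ?B) = card ?A + card ?B" using card_Un_Int[OF fa] by linarith
    ultimately show "odd (card {y \<in> (A-B) \<union> (B-A). v y i}) = (odd (card ?A) \<noteq> odd (card ?B))"
      unfolding e by (rule parity_aux)
  qed
  have Ssing: "S {x} = v x" for x
  proof -
    have "\<And>i. {y\<in>{x}. v y i} = (if v x i then {x} else {})" by auto
    thus ?thesis unfolding S_def by (auto simp: fun_eq_iff)
  qed
  have Sins: "S (insert x Z) = (\<lambda>i. S Z i \<noteq> v x i)" if "finite Z" "x \<notin> Z" for x Z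
  proof -
    have e: "insert x Z = (Z - {x}) \<union> ({x} - Z)" using that by auto
    have "S ((Z - {x}) \<union> ({x} - Z)) = (\<lambda>i. S Z i \<noteq> S {x} i)" using that by (intro Ssym) auto
    thus ?thesis unfolding Ssing e[symmetric] .
  qed
  have V1: "\<exists>W\<subseteq>X. S W = v x" if X: "X \<subseteq> E" and x: "x \<in> cl X" for X x
  proof (cases "x \<in> X")
    case True thus ?thesis using Ssing by (intro exI[of _ "{x}"]) auto
  next
    case False
    obtain J where J: "J \<subseteq> X" "I J" "card J = rk I X" using rk_ex by blast
    have fJ: "finite J" using ind_fin J by auto
    have xJ: "x \<notin> J" using J False by auto
    have "\<not> I (insert x J)"
    proof
      assume "I (insert x J)"
      hence "card (insert x J) \<le> rk I (insert x X)" using J by (intro rk_ge) auto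
      thus False using x cl_iff J fJ xJ by auto
    qed
    moreover have "insert x J \<subseteq> E" using x cl_iff J X by auto
    ultimately obtain Y where Y: "Y \<subseteq> insert x J" "Y \<noteq> {}" "S Y = (\<lambda>i. False)" using indS[of "insert x J"] by blast
    have "x \<in> Y"
    proof (rule ccontr)
      assume "x \<notin> Y" hence "Y \<subseteq> J" using Y(1) by auto
      thus False using indS[of J] J(2) Y(2,3) by blast
    qed
    hence "Y = insert x (Y - {x})" by auto
    moreover have "finite (Y - {x})" using Y fJ finite_subset by blast
    ultimately have "S Y = (\<lambda>i. S (Y - {x}) i \<noteq> v x i)" using Sins by (metis Diff_iff insertI1)
    hence "S (Y - {x}) = v x" using Y by (auto simp: fun_eq_iff)
    thus ?thesis using Y J by (intro exI[of _ "Y - {x}"]) auto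
  qed
  have V2: "x \<in> cl X" if X: "X \<subseteq> E" and x: "x \<in> E" and W: "W \<subseteq> X" "S W = v x" for X x W
  proof (rule ccontr)
    assume nx: "x \<notin> cl X"
    hence xX: "x \<notin> X" using cl_sub X by auto
    obtain J where J: "J \<subseteq> X" "I J" "card J = rk I X" using rk_ex by blast
    have fJ: "finite J" using ind_fin J by auto
    have each: "\<exists>Z\<subseteq>J. S Z = v w" if w: "w \<in> X" for w
    proof -
      have "rk I (insert w J) \<le> rk I X" using w J by (intro rk_mono) auto
      moreover have "rk I J \<le> rk I (insert w J)" by (intro rk_mono) auto
      ultimately have "w \<in> cl J" using J rk_ind w X cl_iff by auto
      thus ?thesis using V1[of J w] J X by auto
    qed
    have gen: "finite W' \<Longrightarrow> W' \<subseteq> X \<Longrightarrow> \<exists>Z\<subseteq>J. S Z = S W'" for W'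
    proof (induction W' rule: finite_induct)
      case empty thus ?case by (intro exI[of _ "{}"]) auto
    next
      case (insert w W')
      obtain Z1 where Z1: "Z1 \<subseteq> J" "S Z1 = S W'" using insert by auto
      obtain Z2 where Z2: "Z2 \<subseteq> J" "S Z2 = v w" using each[of w] insert.prems by auto
      have "finite Z1" "finite Z2" using Z1 Z2 fJ finite_subset by auto
      hence "S ((Z1 - Z2) \<union> (Z2 - Z1)) = (\<lambda>i. S Z1 i \<noteq> S Z2 i)" by (intro Ssym)
      also have "\<dots> = S (insert w W')" using Sins[of W' w] insert.hyps Z1 Z2 by simp
      finally have "S ((Z1 - Z2) \<union> (Z2 - Z1)) = S (insert w W')" .
      thus ?case using Z1 Z2 by (intro exI[of _ "(Z1 - Z2) \<union> (Z2 - Z1)"]) auto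
    qed
    have "finite W" using finite_subset[OF _ finE, of W] W(1) X by auto
    then obtain Z where Z: "Z \<subseteq> J" "S Z = S W" using gen[OF _ W(1)] by blast
    hence Z: "Z \<subseteq> J" "S Z = v x" using W(2) by auto
    have "rk I X \<le> rk I (insert x X)" by (intro rk_mono) auto
    hence lt: "rk I X < rk I (insert x X)" using nx x cl_iff by auto
    obtain J' where J': "J \<subseteq> J'" "J' \<subseteq> insert x X" "I J'" "card J' = rk I (insert x X)"
      using extend[of J "insert x X"] J by auto
    have "J' \<noteq> J" using J' J lt by auto
    then obtain z where z: "z \<in> J'" "z \<notin> J" using J' by auto
    have "z = x"
    proof (rule ccontr)
      assume "z \<noteq> x"
      hence "insert z J \<subseteq> X" using z J' J by auto
      moreover have "I (insert z J)" using ind_mono J' z by auto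
      ultimately have "card (insert z J) \<le> rk I X" using rk_ge by blast
      thus False using z fJ J by auto
    qed
    hence Ix: "I (insert x J)" using ind_mono J' z by auto
    have "finite Z" using Z fJ finite_subset by auto
    moreover have "x \<notin> Z" using Z J xX by auto
    ultimately have "S (insert x Z) = (\<lambda>i. S Z i \<noteq> v x i)" by (rule Sins)
    hence S0: "S (insert x Z) = (\<lambda>i. False)" using Z(2) by (auto simp: fun_eq_iff)
    have "insert x Z \<subseteq> insert x J" using Z by auto
    hence "S (insert x Z) \<noteq> (\<lambda>i. False)" using indS[of "insert x J"] Ix by blast
    thus False using S0 by simp
  qed
  obtain t a b where T3: "T = {t, a, b}" "t \<noteq> a" "a \<noteq> b" "t \<noteq> b" using C(2) unfolding card_3_iff by blast
  have TE: "T \<subseteq> E" and nT: "\<not> I T" and TT: "\<forall>x\<in>T. I (T - {x})" using C(1) unfolding circuit_def by auto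
  have ST: "S T = (\<lambda>i. False)"
  proof -
    obtain Y where Y: "Y \<subseteq> T" "Y \<noteq> {}" "S Y = (\<lambda>i. False)" using nT TE indS[of T] by blast
    have "Y = T"
    proof (rule ccontr)
      assume "Y \<noteq> T"
      then obtain z where "z \<in> T" "z \<notin> Y" using Y by auto
      hence "I (T - {z})" "Y \<subseteq> T - {z}" using TT Y by auto
      thus False using indS[of "T - {z}"] Y by blast
    qed
    thus ?thesis using Y by auto
  qed
  have s1: "S {a,b} = (\<lambda>i. S {b} i \<noteq> v a i)" by (rule Sins) (use T3 in auto)
  have s2: "S {t,a,b} = (\<lambda>i. S {a,b} i \<noteq> v t i)" by (rule Sins) (use T3 in auto)
  have ST2: "S T = (\<lambda>i. (v b i \<noteq> v a i) \<noteq> v t i)"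
    unfolding T3(1) s2 s1 Ssing by simp
  have vt: "v t = (\<lambda>i. v a i \<noteq> v b i)" using ST ST2 by (auto simp: fun_eq_iff)
  have HE: "H \<subseteq> E" and flH: "is_flat E I H" and rH: "Suc (rk I H) = rk I E" using H unfolding hyp_def is_flat_def by auto
  have tE: "t \<in> E" "a \<in> E" "b \<in> E" using TE T3 by auto
  have nH: "t \<notin> H" "a \<notin> H" "b \<notin> H" using disj T3 by auto
  have rt: "rk I (insert t H) = rk I E"
  proof -
    have "rk I H < rk I (insert t H)" using flH tE nH unfolding is_flat_def by auto
    moreover have "rk I (insert t H) \<le> rk I E" using tE HE by (intro rk_mono) auto
    ultimately show ?thesis using rH by auto
  qed
  have clt: "y \<in> cl (insert t H)" if "y \<in> E" for y
  proof -
    have "rk I (insert y (insert t H)) \<le> rk I E" using that tE HE by (intro rk_mono) auto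
    moreover have "rk I (insert t H) \<le> rk I (insert y (insert t H))" by (intro rk_mono) auto
    ultimately show ?thesis using rt that cl_iff by auto
  qed
  have tHE: "insert t H \<subseteq> E" using tE HE by auto
  obtain Wa where Wa: "Wa \<subseteq> insert t H" "S Wa = v a" using V1[OF tHE clt[OF tE(2)]] by auto
  obtain Wb where Wb: "Wb \<subseteq> insert t H" "S Wb = v b" using V1[OF tHE clt[OF tE(3)]] by auto
  have clH: "y \<notin> cl H" if "y \<in> E" "y \<notin> H" for y using flH that unfolding flat_iff by auto
  have tWa: "t \<in> Wa"
  proof (rule ccontr)
    assume "t \<notin> Wa" hence "Wa \<subseteq> H" using Wa(1) by auto
    hence "a \<in> cl H" by (rule V2[OF HE tE(2) _ Wa(2)])
    thus False using clH[OF tE(2) nH(2)] by simp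
  qed
  have tWb: "t \<in> Wb"
  proof (rule ccontr)
    assume "t \<notin> Wb" hence "Wb \<subseteq> H" using Wb(1) by auto
    hence "b \<in> cl H" by (rule V2[OF HE tE(3) _ Wb(2)])
    thus False using clH[OF tE(3) nH(3)] by simp
  qed
  have ftH: "finite (insert t H)" using finite_subset[OF tHE finE] .
  have fW: "finite Wa" "finite Wb" using finite_subset[OF Wa(1) ftH] finite_subset[OF Wb(1) ftH] by auto
  have U1: "(Wa - Wb) \<union> (Wb - Wa) \<subseteq> H" using Wa(1) Wb(1) tWa tWb by auto
  have "S ((Wa - Wb) \<union> (Wb - Wa)) = (\<lambda>i. S Wa i \<noteq> S Wb i)" using Ssym[OF fW] .
  hence U2: "S ((Wa - Wb) \<union> (Wb - Wa)) = v t" unfolding Wa(2) Wb(2) vt .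
  have "t \<in> cl H" by (rule V2[OF HE tE(1) U1 U2])
  thus False using clH[OF tE(1) nH(1)] by simp
qed


lemma tri_flat: assumes C: "circuit E I T" "card T = 3" and F: "is_flat E I F"
  shows "F \<inter> T = {} \<or> (\<exists>x. F \<inter> T = {x}) \<or> T \<subseteq> F"
proof (rule ccontr)
  assume A: "\<not> ?thesis"
  then obtain x where x: "x \<in> F" "x \<in> T" by auto
  have "F \<inter> T \<noteq> {x}" using A by auto
  then obtain y where y: "y \<in> F" "y \<in> T" "y \<noteq> x" using x by blast
  obtain z where z: "z \<in> T" "z \<notin> F" using A by auto
  have sub: "{x,y,z} \<subseteq> T" using x y z by auto
  have fT: "finite T" using C(1) finE finite_subset unfolding circuit_def by blast
  have d: "z \<noteq> x" "z \<noteq> y" using x y z by auto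
  have "card {x,y,z} = 3" using d y(3) by (simp add: card_insert_if)
  hence "{x,y,z} = T" using card_seteq[OF fT sub] C(2) by auto
  hence "T - {z} \<subseteq> F" using x y z by auto
  hence "z \<in> F" using circuit_flat[OF C(1) z(1) F] by blast
  thus False using z by auto
qed

lemma N_gen: assumes nc: "\<forall>C. C \<subseteq> T \<longrightarrow> \<not> cocircuit E I C" and TE: "T \<subseteq> E"
  and F: "is_flat E I F" "E - T \<subseteq> F" shows "T \<subseteq> F"
proof -
  let ?W = "cl (E - T)"
  have fl: "is_flat E I ?W" by (rule cl_flat) auto
  have sub: "E - T \<subseteq> ?W" by (rule cl_sub) auto
  have "?W = E"
  proof (rule ccontr)
    assume "?W \<noteq> E"
    then obtain H where H: "hyp E I H" "?W \<subseteq> H" using hyp_exists fl by blast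
    have HE: "H \<subseteq> E" using H unfolding hyp_def is_flat_def by auto
    have e: "E - (E - H) = H" using HE by auto
    have "cocircuit E I (E - H)" using cocircuit_hyp[of "E - H"] H(1) unfolding e by auto
    moreover have "E - H \<subseteq> T" using sub H(2) by auto
    ultimately show False using nc by auto
  qed
  thus ?thesis using cl_least[OF F] TE by auto
qed

end




locale psum =
  fixes E1 E2 T :: "'a set" and I1 I2 IP :: "'a set \<Rightarrow> bool"
  assumes M1: "matroid E1 I1" "binary E1 I1" and M2: "matroid E2 I2" "binary E2 I2"
  and T: "T = E1 \<inter> E2" "triangle E1 I1 T" "triangle E2 I2 T"
  and nococ: "\<forall>C. C \<subseteq> T \<longrightarrow> \<not> cocircuit E1 I1 C \<and> \<not> cocircuit E2 I2 C"
  and P: "matroid (E1 \<union> E2) IP"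
  and P_flats: "\<forall>F. is_flat (E1 \<union> E2) IP F \<longleftrightarrow>
                        F \<subseteq> E1 \<union> E2 \<and> is_flat E1 I1 (F \<inter> E1) \<and> is_flat E2 I2 (F \<inter> E2)"
begin

sublocale A: mat E1 I1 by (rule mat.intro[OF M1(1)])
sublocale B: mat E2 I2 by (rule mat.intro[OF M2(1)])
sublocale P: mat "E1 \<union> E2" IP by (rule mat.intro[OF P])

abbreviation "U \<equiv> E1 \<union> E2"

lemma TE1: "T \<subseteq> E1" and TE2: "T \<subseteq> E2" and TU: "T \<subseteq> U" and TI: "E1 \<inter> E2 = T"
  using T(1) by auto
lemma circ1: "circuit E1 I1 T" and circ2: "circuit E2 I2 T" and cT: "card T = 3"
  using T unfolding triangle_def by auto
lemma finT: "finite T" using cT by (metis card.infinite zero_neq_numeral)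
lemma Tne: "T \<noteq> {}" using cT by auto

lemma Lf: "is_flat U IP F \<longleftrightarrow> F \<subseteq> U \<and> is_flat E1 I1 (F \<inter> E1) \<and> is_flat E2 I2 (F \<inter> E2)"
  using P_flats by blast

lemma flatE1: "is_flat E1 I1 F \<Longrightarrow> F \<subseteq> E1" unfolding is_flat_def by auto
lemma flatE2: "is_flat E2 I2 F \<Longrightarrow> F \<subseteq> E2" unfolding is_flat_def by auto
lemma flatU: "is_flat U IP F \<Longrightarrow> F \<subseteq> U" unfolding is_flat_def by auto

lemma tri1: "is_flat E1 I1 F \<Longrightarrow> F \<inter> T = {} \<or> (\<exists>x. F \<inter> T = {x}) \<or> T \<subseteq> F"
  using A.tri_flat[OF circ1 cT] by blast
lemma tri2: "is_flat E2 I2 F \<Longrightarrow> F \<inter> T = {} \<or> (\<exists>x. F \<inter> T = {x}) \<or> T \<subseteq> F"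
  using B.tri_flat[OF circ2 cT] by blast

lemma tri1E: assumes "is_flat E1 I1 F" and "F \<inter> T = {} \<Longrightarrow> P" and "\<And>x. F \<inter> T = {x} \<Longrightarrow> P" and "T \<subseteq> F \<Longrightarrow> P" shows P
proof -
  have "F \<inter> T = {} \<or> (\<exists>x. F \<inter> T = {x}) \<or> T \<subseteq> F" by (rule tri1[OF assms(1)])
  thus P using assms(2-4) by blast
qed
lemma tri2E: assumes "is_flat E2 I2 F" and "F \<inter> T = {} \<Longrightarrow> P" and "\<And>x. F \<inter> T = {x} \<Longrightarrow> P" and "T \<subseteq> F \<Longrightarrow> P" shows P
proof -
  have "F \<inter> T = {} \<or> (\<exists>x. F \<inter> T = {x}) \<or> T \<subseteq> F" by (rule tri2[OF assms(1)])
  thus P using assms(2-4) by blast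
qed

lemma N1: "is_flat E1 I1 F \<Longrightarrow> E1 - T \<subseteq> F \<Longrightarrow> T \<subseteq> F"
  using A.N_gen[OF _ TE1] nococ by blast
lemma N2: "is_flat E2 I2 F \<Longrightarrow> E2 - T \<subseteq> F \<Longrightarrow> T \<subseteq> F"
  using B.N_gen[OF _ TE2] nococ by blast

lemma cl1_sub: assumes X: "X \<subseteq> E1" shows "clo E1 I1 X \<subseteq> clo U IP X"
proof -
  have "is_flat U IP (clo U IP X)" by (rule P.cl_flat) (use X in auto)
  hence "is_flat E1 I1 (clo U IP X \<inter> E1)" using Lf by blast
  moreover have "X \<subseteq> clo U IP X \<inter> E1" using P.cl_sub[of X] X by auto
  ultimately show ?thesis using A.cl_least by blast
qed
lemma cl2_sub: assumes X: "X \<subseteq> E2" shows "clo E2 I2 X \<subseteq> clo U IP X"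
proof -
  have "is_flat U IP (clo U IP X)" by (rule P.cl_flat) (use X in auto)
  hence "is_flat E2 I2 (clo U IP X \<inter> E2)" using Lf by blast
  moreover have "X \<subseteq> clo U IP X \<inter> E2" using P.cl_sub[of X] X by auto
  ultimately show ?thesis using B.cl_least by blast
qed

lemma NT1: "T \<subseteq> clo U IP (E1 - T)"
proof -
  have "is_flat E1 I1 (clo E1 I1 (E1 - T))" by (rule A.cl_flat) auto
  moreover have "E1 - T \<subseteq> clo E1 I1 (E1 - T)" by (rule A.cl_sub) auto
  ultimately have "T \<subseteq> clo E1 I1 (E1 - T)" using N1 by blast
  thus ?thesis using cl1_sub[of "E1 - T"] by auto
qed
lemma NT2: "T \<subseteq> clo U IP (E2 - T)"
proof -
  have "is_flat E2 I2 (clo E2 I2 (E2 - T))" by (rule B.cl_flat) auto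
  moreover have "E2 - T \<subseteq> clo E2 I2 (E2 - T)" by (rule B.cl_sub) auto
  ultimately have "T \<subseteq> clo E2 I2 (E2 - T)" using N2 by blast
  thus ?thesis using cl2_sub[of "E2 - T"] by auto
qed

definition EM where "EM = U - T"
definition IM where "IM = delete_indep IP T"

lemma M_matroid: "matroid EM IM"
  unfolding matroid_def
proof (intro conjI allI impI)
  show "finite EM" unfolding EM_def using P.finE by auto
  show "IM {}" unfolding IM_def delete_indep_def using P.ind_empty by auto
  show "IM X \<Longrightarrow> X \<subseteq> EM" for X unfolding IM_def delete_indep_def EM_def using P.ind_sub by auto
  show "IM X \<and> Y \<subseteq> X \<Longrightarrow> IM Y" for X Y unfolding IM_def delete_indep_def using P.ind_mono by auto
  show "\<exists>y\<in>Y - X. IM (insert y X)" if A: "IM X \<and> IM Y \<and> card X < card Y" for X Y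
  proof -
    have "IP X" "IP Y" "card X < card Y" using A unfolding IM_def delete_indep_def by auto
    then obtain y where "y \<in> Y - X" "IP (insert y X)" using P.aug by blast
    thus ?thesis using A unfolding IM_def delete_indep_def by auto
  qed
qed

sublocale M: mat EM IM by (rule mat.intro[OF M_matroid])

lemma EMT: "EM \<inter> T = {}" and EMU: "EM \<subseteq> U" and UEM: "U = EM \<union> T" unfolding EM_def using TU by auto

lemma rkM: "X \<subseteq> EM \<Longrightarrow> rk IM X = rk IP X"
proof -
  assume X: "X \<subseteq> EM"
  have "{Y. Y \<subseteq> X \<and> IM Y} = {Y. Y \<subseteq> X \<and> IP Y}" using X EMT unfolding IM_def delete_indep_def by auto
  thus ?thesis unfolding rk_def by simp
qed

lemma clEM: "clo U IP EM = U"
proof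
  show "clo U IP EM \<subseteq> U" by (rule P.cl_E)
  have "E1 - T \<subseteq> EM" unfolding EM_def by auto
  hence "clo U IP (E1 - T) \<subseteq> clo U IP EM" by (rule P.cl_mono)
  hence "T \<subseteq> clo U IP EM" using NT1 by auto
  moreover have "EM \<subseteq> clo U IP EM" by (rule P.cl_sub) (rule EMU)
  ultimately show "U \<subseteq> clo U IP EM" using UEM by auto
qed

lemma rkME: "rk IM EM = rk IP U"
  using rkM[of EM] P.rk_cl[OF EMU] clEM by auto

lemma hypM_intro: assumes K: "K \<subseteq> EM" and h: "hyp U IP (clo U IP K)" and e: "clo U IP K - T = K"
  shows "hyp EM IM K"
proof -
  have KU: "K \<subseteq> U" using K EMU by auto
  have fl: "is_flat EM IM K" unfolding is_flat_def
  proof (intro conjI ballI K)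
    fix x assume x: "x \<in> EM - K"
    have "x \<notin> clo U IP K" using x e EMT by auto
    hence "rk IP (insert x K) \<noteq> rk IP K" using P.cl_iff x EMU by auto
    moreover have "rk IP K \<le> rk IP (insert x K)" by (rule P.rk_mono) auto
    moreover have "insert x K \<subseteq> EM" using x K by auto
    ultimately show "rk IM K < rk IM (insert x K)" using rkM K by auto
  qed
  have "rk IM K = rk IP (clo U IP K)" using rkM[OF K] P.rk_cl[OF KU] by auto
  hence "Suc (rk IM K) = rk IM EM" using h rkME unfolding hyp_def by auto
  thus ?thesis unfolding hyp_def using fl by auto
qed

lemma hypM_elim: assumes h: "hyp EM IM K" shows "hyp U IP (clo U IP K)" "clo U IP K - T = K"
proof -
  have K: "K \<subseteq> EM" using h unfolding hyp_def is_flat_def by auto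
  have KU: "K \<subseteq> U" using K EMU by auto
  have "rk IP (clo U IP K) = rk IM K" using rkM[OF K] P.rk_cl[OF KU] by auto
  hence "Suc (rk IP (clo U IP K)) = rk IP U" using h rkME unfolding hyp_def by auto
  moreover have "is_flat U IP (clo U IP K)" by (rule P.cl_flat[OF KU])
  ultimately show "hyp U IP (clo U IP K)" unfolding hyp_def by auto
  show "clo U IP K - T = K"
  proof
    show "K \<subseteq> clo U IP K - T" using P.cl_sub[OF KU] K EMT by auto
    show "clo U IP K - T \<subseteq> K"
    proof
      fix y assume y: "y \<in> clo U IP K - T"
      hence yE: "y \<in> EM" using P.cl_E UEM by auto
      show "y \<in> K"
      proof (rule ccontr)
        assume "y \<notin> K"
        hence "rk IM K < rk IM (insert y K)" using h yE unfolding hyp_def is_flat_def by auto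
        moreover have "insert y K \<subseteq> EM" using yE K by auto
        ultimately have "rk IP K < rk IP (insert y K)" using rkM K by auto
        thus False using y P.cl_iff by auto
      qed
    qed
  qed
qed


lemma flatP_intro: "G \<subseteq> U \<Longrightarrow> is_flat E1 I1 (G \<inter> E1) \<Longrightarrow> is_flat E2 I2 (G \<inter> E2) \<Longrightarrow> is_flat U IP G"
  using Lf by blast
lemma Tsing: "T \<subseteq> {x} \<Longrightarrow> False"
proof -
  assume "T \<subseteq> {x}"
  hence "card T \<le> card {x}" by (intro card_mono) auto
  thus False using cT by auto
qed

lemma Pco: "hyp U IP G \<longleftrightarrow> is_flat U IP G \<and> G \<noteq> U \<and> (\<forall>G'. is_flat U IP G' \<and> G \<subseteq> G' \<longrightarrow> G' = G \<or> G' = U)"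
  by (rule P.hyp_coatom)
lemma Aco: "hyp E1 I1 G \<longleftrightarrow> is_flat E1 I1 G \<and> G \<noteq> E1 \<and> (\<forall>G'. is_flat E1 I1 G' \<and> G \<subseteq> G' \<longrightarrow> G' = G \<or> G' = E1)"
  by (rule A.hyp_coatom)
lemma Bco: "hyp E2 I2 G \<longleftrightarrow> is_flat E2 I2 G \<and> G \<noteq> E2 \<and> (\<forall>G'. is_flat E2 I2 G' \<and> G \<subseteq> G' \<longrightarrow> G' = G \<or> G' = E2)"
  by (rule B.hyp_coatom)

lemma noCP: assumes G: "hyp U IP G" shows "G \<inter> T \<noteq> {}"
proof
  assume GT: "G \<inter> T = {}"
  have Gf: "is_flat U IP G" and Gmax: "\<And>G'. is_flat U IP G' \<Longrightarrow> G \<subseteq> G' \<Longrightarrow> G' = G \<or> G' = U"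
    using G unfolding Pco by blast+
  have GU: "G \<subseteq> U" using Gf flatU by auto
  have F1: "is_flat E1 I1 (G \<inter> E1)" and F2: "is_flat E2 I2 (G \<inter> E2)" using Gf Lf by blast+
  obtain t where t: "t \<in> T" using Tne by auto
  have tG: "t \<notin> G" using GT t by auto
  have tE: "t \<in> E1" "t \<in> E2" using t TE1 TE2 by auto
  have key: "\<And>G'. is_flat U IP G' \<Longrightarrow> G \<subseteq> G' \<Longrightarrow> t \<in> G' \<Longrightarrow> G' \<noteq> U \<Longrightarrow> False"
    using Gmax tG by blast
  have nh1: "\<not> hyp E1 I1 (G \<inter> E1)" using A.binary_hyp_meets[OF M1(2) circ1 cT] GT by auto
  have nh2: "\<not> hyp E2 I2 (G \<inter> E2)" using B.binary_hyp_meets[OF M2(2) circ2 cT] GT by auto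
  have lt1: "rk I1 (G \<inter> E1) < rk I1 E1" using A.flat_less[OF F1 A.flat_E] tG tE by auto
  have lt2: "rk I2 (G \<inter> E2) < rk I2 E2" using B.flat_less[OF F2 B.flat_E] tG tE by auto
  have lt1': "Suc (Suc (rk I1 (G \<inter> E1))) \<le> rk I1 E1" using lt1 nh1 F1 unfolding hyp_def by auto
  have lt2': "Suc (Suc (rk I2 (G \<inter> E2))) \<le> rk I2 E2" using lt2 nh2 F2 unfolding hyp_def by auto
  define A1 where "A1 = clo E1 I1 (insert t (G \<inter> E1))"
  define A2 where "A2 = clo E2 I2 (insert t (G \<inter> E2))"
  have iA1: "insert t (G \<inter> E1) \<subseteq> E1" using tE by auto
  have iA2: "insert t (G \<inter> E2) \<subseteq> E2" using tE by auto
  have A1f: "is_flat E1 I1 A1" unfolding A1_def by (rule A.cl_flat[OF iA1])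
  have A2f: "is_flat E2 I2 A2" unfolding A2_def by (rule B.cl_flat[OF iA2])
  have A1s: "insert t (G \<inter> E1) \<subseteq> A1" unfolding A1_def by (rule A.cl_sub[OF iA1])
  have A2s: "insert t (G \<inter> E2) \<subseteq> A2" unfolding A2_def by (rule B.cl_sub[OF iA2])
  have "rk I1 A1 \<le> Suc (rk I1 (G \<inter> E1))" unfolding A1_def using A.rk_cl[OF iA1] A.rk_insert[of t "G \<inter> E1"] by auto
  hence A1ne: "A1 \<noteq> E1" using lt1' by auto
  have "rk I2 A2 \<le> Suc (rk I2 (G \<inter> E2))" unfolding A2_def using B.rk_cl[OF iA2] B.rk_insert[of t "G \<inter> E2"] by auto
  hence A2ne: "A2 \<noteq> E2" using lt2' by auto
  have A1E: "A1 \<subseteq> E1" using A1f flatE1 by auto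
  have A2E: "A2 \<subseteq> E2" using A2f flatE2 by auto
  have c1: "T \<subseteq> A1 \<or> A1 \<inter> T = {t}"
  proof -
    have tA: "t \<in> A1 \<inter> T" using A1s t by auto
    show ?thesis
    proof (rule tri1E[OF A1f])
      assume "A1 \<inter> T = {}" thus ?thesis using tA by auto
    next
      fix x assume e: "A1 \<inter> T = {x}"
      hence "x = t" using tA by auto
      thus ?thesis using e by auto
    qed auto
  qed
  have c2: "T \<subseteq> A2 \<or> A2 \<inter> T = {t}"
  proof -
    have tA: "t \<in> A2 \<inter> T" using A2s t by auto
    show ?thesis
    proof (rule tri2E[OF A2f])
      assume "A2 \<inter> T = {}" thus ?thesis using tA by auto
    next
      fix x assume e: "A2 \<inter> T = {x}"
      hence "x = t" using tA by auto
      thus ?thesis using e by auto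
    qed auto
  qed
  have GA: "G \<subseteq> A1 \<union> A2" using GU A1s A2s by auto
  show False
  proof (cases "T \<subseteq> A1")
    case True
    let ?G' = "A1 \<union> E2"
    have e1: "?G' \<inter> E1 = A1" using A1E True TI by auto
    have e2: "?G' \<inter> E2 = E2" by auto
    have "is_flat U IP ?G'" by (rule flatP_intro) (use e1 e2 A1f B.flat_E A1E in auto)
    moreover have "G \<subseteq> ?G'" using A1s GU by auto
    moreover have "?G' \<noteq> U" using e1 A1ne by auto
    ultimately show False using key[of ?G'] A1s by auto
  next
    case False
    hence a1: "A1 \<inter> T = {t}" using c1 by auto
    show False
    proof (cases "T \<subseteq> A2")
      case True
      let ?G' = "E1 \<union> A2"
      have e2: "?G' \<inter> E2 = A2" using A2E True TI by auto
      have e1: "?G' \<inter> E1 = E1" by auto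
      have "is_flat U IP ?G'" by (rule flatP_intro) (use e1 e2 A2f A.flat_E A2E in auto)
      moreover have "G \<subseteq> ?G'" using A2s GU by auto
      moreover have "?G' \<noteq> U" using e2 A2ne by auto
      ultimately show False using key[of ?G'] A2s by auto
    next
      case False
      hence a2: "A2 \<inter> T = {t}" using c2 by auto
      let ?G' = "A1 \<union> A2"
      have s21: "A2 \<inter> E1 \<subseteq> A2 \<inter> T" using A2E TI by blast
      have s12: "A1 \<inter> E2 \<subseteq> A1 \<inter> T" using A1E TI by blast
      have e1: "?G' \<inter> E1 = A1" using s21 a2 A1E A1s by auto
      have e2: "?G' \<inter> E2 = A2" using s12 a1 A2E A2s by auto
      have "is_flat U IP ?G'" by (rule flatP_intro) (use e1 e2 A1f A2f A1E A2E in auto)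
      moreover have "?G' \<noteq> U"
      proof
        assume "?G' = U"
        hence "T \<subseteq> ?G' \<inter> T" using TU by auto
        also have "\<dots> \<subseteq> {t}" using a1 a2 by auto
        finally show False using Tsing by auto
      qed
      ultimately show False using key[of ?G'] GA A1s by auto
    qed
  qed
qed

lemma buildA2: assumes h: "hyp E2 I2 H2" and TH: "T \<subseteq> H2" shows "hyp U IP (E1 \<union> H2)"
proof -
  have Hf: "is_flat E2 I2 H2" and Hne: "H2 \<noteq> E2" and Hmax: "\<And>G'. is_flat E2 I2 G' \<Longrightarrow> H2 \<subseteq> G' \<Longrightarrow> G' = H2 \<or> G' = E2"
    using h unfolding Bco by blast+
  have HE: "H2 \<subseteq> E2" using Hf flatE2 by auto
  have e1: "(E1 \<union> H2) \<inter> E1 = E1" by auto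
  have e2: "(E1 \<union> H2) \<inter> E2 = H2" using HE TH TI by auto
  have fl: "is_flat U IP (E1 \<union> H2)" by (rule flatP_intro) (use e1 e2 Hf A.flat_E HE in auto)
  have ne: "E1 \<union> H2 \<noteq> U" using e2 Hne by auto
  have mx: "G = E1 \<union> H2 \<or> G = U" if G: "is_flat U IP G" "E1 \<union> H2 \<subseteq> G" for G
  proof -
    have GU: "G \<subseteq> U" using G flatU by auto
    have "is_flat E2 I2 (G \<inter> E2)" using G Lf by blast
    moreover have "H2 \<subseteq> G \<inter> E2" using G HE by auto
    ultimately have "G \<inter> E2 = H2 \<or> G \<inter> E2 = E2" using Hmax by blast
    thus ?thesis using GU G(2) by auto
  qed
  show ?thesis unfolding Pco using fl ne mx by blast
qed

lemma buildA1: assumes h: "hyp E1 I1 H1" and TH: "T \<subseteq> H1" shows "hyp U IP (H1 \<union> E2)"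
proof -
  have Hf: "is_flat E1 I1 H1" and Hne: "H1 \<noteq> E1" and Hmax: "\<And>G'. is_flat E1 I1 G' \<Longrightarrow> H1 \<subseteq> G' \<Longrightarrow> G' = H1 \<or> G' = E1"
    using h unfolding Aco by blast+
  have HE: "H1 \<subseteq> E1" using Hf flatE1 by auto
  have e2: "(H1 \<union> E2) \<inter> E2 = E2" by auto
  have e1: "(H1 \<union> E2) \<inter> E1 = H1" using HE TH TI by auto
  have fl: "is_flat U IP (H1 \<union> E2)" by (rule flatP_intro) (use e1 e2 Hf B.flat_E HE in auto)
  have ne: "H1 \<union> E2 \<noteq> U" using e1 Hne by auto
  have mx: "G = H1 \<union> E2 \<or> G = U" if G: "is_flat U IP G" "H1 \<union> E2 \<subseteq> G" for G
  proof -
    have GU: "G \<subseteq> U" using G flatU by auto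
    have "is_flat E1 I1 (G \<inter> E1)" using G Lf by blast
    moreover have "H1 \<subseteq> G \<inter> E1" using G HE by auto
    ultimately have "G \<inter> E1 = H1 \<or> G \<inter> E1 = E1" using Hmax by blast
    thus ?thesis using GU G(2) by auto
  qed
  show ?thesis unfolding Pco using fl ne mx by blast
qed

lemma buildB: assumes h1: "hyp E1 I1 H1" and h2: "hyp E2 I2 H2" and x1: "H1 \<inter> T = {x}" and x2: "H2 \<inter> T = {x}"
  shows "hyp U IP (H1 \<union> H2)"
proof -
  have H1f: "is_flat E1 I1 H1" and H1ne: "H1 \<noteq> E1" and H1max: "\<And>G'. is_flat E1 I1 G' \<Longrightarrow> H1 \<subseteq> G' \<Longrightarrow> G' = H1 \<or> G' = E1"
    using h1 unfolding Aco by blast+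
  have H2f: "is_flat E2 I2 H2" and H2ne: "H2 \<noteq> E2" and H2max: "\<And>G'. is_flat E2 I2 G' \<Longrightarrow> H2 \<subseteq> G' \<Longrightarrow> G' = H2 \<or> G' = E2"
    using h2 unfolding Bco by blast+
  have H1E: "H1 \<subseteq> E1" using H1f flatE1 by auto
  have H2E: "H2 \<subseteq> E2" using H2f flatE2 by auto
  have s21: "H2 \<inter> E1 \<subseteq> H2 \<inter> T" using H2E TI by blast
  have s12: "H1 \<inter> E2 \<subseteq> H1 \<inter> T" using H1E TI by blast
  have e1: "(H1 \<union> H2) \<inter> E1 = H1" using s21 x1 x2 H1E by auto
  have e2: "(H1 \<union> H2) \<inter> E2 = H2" using s12 x1 x2 H2E by auto
  have fl: "is_flat U IP (H1 \<union> H2)" by (rule flatP_intro) (use e1 e2 H1f H2f H1E H2E in auto)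
  have nT1: "\<not> T \<subseteq> H1" using x1 Tsing by blast
  have nT2: "\<not> T \<subseteq> H2" using x2 Tsing by blast
  have ne: "H1 \<union> H2 \<noteq> U" using e1 H1ne by auto
  have mx: "G = H1 \<union> H2 \<or> G = U" if G: "is_flat U IP G" "H1 \<union> H2 \<subseteq> G" for G
  proof -
    have GU: "G \<subseteq> U" using G flatU by auto
    have "is_flat E1 I1 (G \<inter> E1)" using G Lf by blast
    moreover have "H1 \<subseteq> G \<inter> E1" using G H1E by auto
    ultimately have g1: "G \<inter> E1 = H1 \<or> G \<inter> E1 = E1" using H1max by blast
    have "is_flat E2 I2 (G \<inter> E2)" using G Lf by blast
    moreover have "H2 \<subseteq> G \<inter> E2" using G H2E by auto
    ultimately have g2: "G \<inter> E2 = H2 \<or> G \<inter> E2 = E2" using H2max by blast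
    show ?thesis
    proof (cases "G \<inter> E1 = E1 \<or> G \<inter> E2 = E2")
      case True
      hence "T \<subseteq> G" using TE1 TE2 by auto
      hence "G \<inter> E1 = E1" "G \<inter> E2 = E2" using g1 g2 nT1 nT2 TE1 TE2 by auto
      thus ?thesis using GU by auto
    next
      case False
      hence "G \<inter> E1 = H1" "G \<inter> E2 = H2" using g1 g2 by auto
      thus ?thesis using GU by auto
    qed
  qed
  show ?thesis unfolding Pco using fl ne mx by blast
qed


lemma classify: assumes G: "hyp U IP G"
  shows "(\<exists>H2. hyp E2 I2 H2 \<and> T \<subseteq> H2 \<and> G = E1 \<union> H2) \<or> (\<exists>H1. hyp E1 I1 H1 \<and> T \<subseteq> H1 \<and> G = H1 \<union> E2)
       \<or> (\<exists>x H1 H2. hyp E1 I1 H1 \<and> hyp E2 I2 H2 \<and> H1 \<inter> T = {x} \<and> H2 \<inter> T = {x} \<and> G = H1 \<union> H2)"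
proof -
  have Gf: "is_flat U IP G" and Gne: "G \<noteq> U" and Gmax: "\<And>G'. is_flat U IP G' \<Longrightarrow> G \<subseteq> G' \<Longrightarrow> G' = G \<or> G' = U"
    using G unfolding Pco by blast+
  have GU: "G \<subseteq> U" using Gf flatU by auto
  define F1 where "F1 = G \<inter> E1"
  define F2 where "F2 = G \<inter> E2"
  have F1f: "is_flat E1 I1 F1" and F2f: "is_flat E2 I2 F2" using Gf Lf unfolding F1_def F2_def by blast+
  have GF: "G = F1 \<union> F2" using GU unfolding F1_def F2_def by auto
  have F1E: "F1 \<subseteq> E1" and F2E: "F2 \<subseteq> E2" unfolding F1_def F2_def by auto
  have F1T: "F1 \<inter> T = G \<inter> T" and F2T: "F2 \<inter> T = G \<inter> T" unfolding F1_def F2_def using TE1 TE2 by auto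
  have nC: "G \<inter> T \<noteq> {}" by (rule noCP[OF G])
  consider (e) "F1 \<inter> T = {}" | (s) x where "F1 \<inter> T = {x}" | (f) "T \<subseteq> F1" by (rule tri1E[OF F1f])
  thus ?thesis
  proof cases
    case e thus ?thesis using nC F1T by auto
  next
    case f
    hence TF2: "T \<subseteq> F2" using F1T F2T TE2 by auto
    show ?thesis
    proof (cases "F2 = E2")
      case False
      let ?G' = "E1 \<union> F2"
      have e1: "?G' \<inter> E1 = E1" by auto
      have e2: "?G' \<inter> E2 = F2" using F2E TF2 TI by auto
      have fl': "is_flat U IP ?G'" by (rule flatP_intro) (use e1 e2 F2f A.flat_E F2E in auto)
      have "G \<subseteq> ?G'" using GF F1E F2E by auto
      moreover have "?G' \<noteq> U" using e2 False by auto
      ultimately have GG: "G = ?G'" using Gmax[OF fl'] by auto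
      have "hyp E2 I2 F2" unfolding Bco
      proof (intro conjI allI impI F2f False)
        fix F assume F: "is_flat E2 I2 F \<and> F2 \<subseteq> F"
        have FE: "F \<subseteq> E2" using F flatE2 by auto
        let ?G'' = "E1 \<union> F"
        have e1: "?G'' \<inter> E1 = E1" by auto
        have e2: "?G'' \<inter> E2 = F" using FE F TF2 TI by auto
        have fl'': "is_flat U IP ?G''" by (rule flatP_intro) (use e1 e2 F A.flat_E FE in auto)
        have "G \<subseteq> ?G''" using GG F by auto
        hence "?G'' = G \<or> ?G'' = U" using Gmax[OF fl''] by auto
        thus "F = F2 \<or> F = E2"
        proof
          assume "?G'' = G" hence "?G'' \<inter> E2 = G \<inter> E2" by simp
          thus ?thesis using e2 F2_def by auto
        next
          assume "?G'' = U" hence "?G'' \<inter> E2 = E2" by auto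
          thus ?thesis using e2 by auto
        qed
      qed
      thus ?thesis using GG TF2 by blast
    next
      case True
      have F1ne: "F1 \<noteq> E1" using True GF Gne by auto
      let ?G' = "F1 \<union> E2"
      have e2: "?G' \<inter> E2 = E2" by auto
      have e1: "?G' \<inter> E1 = F1" using F1E f TI by auto
      have fl': "is_flat U IP ?G'" by (rule flatP_intro) (use e1 e2 F1f B.flat_E F1E in auto)
      have GG: "G = ?G'" using GF True F1E by auto
      have "hyp E1 I1 F1" unfolding Aco
      proof (intro conjI allI impI F1f F1ne)
        fix F assume F: "is_flat E1 I1 F \<and> F1 \<subseteq> F"
        have FE: "F \<subseteq> E1" using F flatE1 by auto
        let ?G'' = "F \<union> E2"
        have e2: "?G'' \<inter> E2 = E2" by auto
        have e1: "?G'' \<inter> E1 = F" using FE F f TI by auto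
        have fl'': "is_flat U IP ?G''" by (rule flatP_intro) (use e1 e2 F B.flat_E FE in auto)
        have "G \<subseteq> ?G''" using GG F by auto
        hence "?G'' = G \<or> ?G'' = U" using Gmax[OF fl''] by auto
        thus "F = F1 \<or> F = E1"
        proof
          assume "?G'' = G" hence "?G'' \<inter> E1 = G \<inter> E1" by simp
          thus ?thesis using e1 F1_def by auto
        next
          assume "?G'' = U" hence "?G'' \<inter> E1 = E1" by auto
          thus ?thesis using e1 by auto
        qed
      qed
      thus ?thesis using GG f by blast
    qed
  next
    case (s x)
    have x2: "F2 \<inter> T = {x}" using s F1T F2T by auto
    have xT: "x \<in> T" using s by auto
    have nT1: "\<not> T \<subseteq> F1" using s Tsing by blast
    have nT2: "\<not> T \<subseteq> F2" using x2 Tsing by blast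
    have s21: "F2 \<inter> E1 \<subseteq> F2 \<inter> T" using F2E TI by blast
    have s12: "F1 \<inter> E2 \<subseteq> F1 \<inter> T" using F1E TI by blast
    have h1: "hyp E1 I1 F1" unfolding Aco
    proof (intro conjI allI impI F1f)
      show "F1 \<noteq> E1" using nT1 TE1 by auto
      fix F assume F: "is_flat E1 I1 F \<and> F1 \<subseteq> F"
      have FE: "F \<subseteq> E1" using F flatE1 by auto
      have xF: "x \<in> F \<inter> T" using F s by auto
      have sF: "F \<inter> E2 \<subseteq> F \<inter> T" using FE TI by blast
      consider (a) y where "F \<inter> T = {y}" | (b) "T \<subseteq> F"
        by (rule tri1E[of F]) (use F xF in auto)
      thus "F = F1 \<or> F = E1"
      proof cases
        case (a y)
        hence Fx: "F \<inter> T = {x}" using xF by auto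
        let ?G' = "F \<union> F2"
        have e1: "?G' \<inter> E1 = F" using s21 x2 FE xF by auto
        have e2: "?G' \<inter> E2 = F2" using sF Fx F2E x2 by auto
        have fl': "is_flat U IP ?G'" by (rule flatP_intro) (use e1 e2 F F2f FE F2E in auto)
        have "G \<subseteq> ?G'" using GF F F1E F2E by auto
        hence "?G' = G \<or> ?G' = U" using Gmax[OF fl'] by auto
        thus ?thesis
        proof
          assume "?G' = G" hence "?G' \<inter> E1 = G \<inter> E1" by simp
          thus ?thesis using e1 F1_def by auto
        next
          assume "?G' = U" hence "?G' \<inter> E2 = E2" by auto
          hence "T \<subseteq> F2" using e2 TE2 by auto
          thus ?thesis using nT2 by auto
        qed
      next
        case b
        let ?G' = "F \<union> E2"
        have e1: "?G' \<inter> E1 = F" using FE b TI by auto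
        have e2: "?G' \<inter> E2 = E2" by auto
        have fl': "is_flat U IP ?G'" by (rule flatP_intro) (use e1 e2 F B.flat_E FE in auto)
        have "G \<subseteq> ?G'" using GF F F1E F2E by auto
        hence "?G' = G \<or> ?G' = U" using Gmax[OF fl'] by auto
        thus ?thesis
        proof
          assume "?G' = G" hence "T \<subseteq> G" using TE2 by auto
          thus ?thesis using nT2 F2_def TE2 by auto
        next
          assume "?G' = U" hence "?G' \<inter> E1 = E1" by auto
          thus ?thesis using e1 by auto
        qed
      qed
    qed
    have h2: "hyp E2 I2 F2" unfolding Bco
    proof (intro conjI allI impI F2f)
      show "F2 \<noteq> E2" using nT2 TE2 by auto
      fix F assume F: "is_flat E2 I2 F \<and> F2 \<subseteq> F"
      have FE: "F \<subseteq> E2" using F flatE2 by auto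
      have xF: "x \<in> F \<inter> T" using F x2 by auto
      have sF: "F \<inter> E1 \<subseteq> F \<inter> T" using FE TI by blast
      consider (a) y where "F \<inter> T = {y}" | (b) "T \<subseteq> F"
        by (rule tri2E[of F]) (use F xF in auto)
      thus "F = F2 \<or> F = E2"
      proof cases
        case (a y)
        hence Fx: "F \<inter> T = {x}" using xF by auto
        let ?G' = "F1 \<union> F"
        have e2: "?G' \<inter> E2 = F" using s12 s FE xF by auto
        have e1: "?G' \<inter> E1 = F1" using sF Fx F1E s by auto
        have fl': "is_flat U IP ?G'" by (rule flatP_intro) (use e1 e2 F F1f FE F1E in auto)
        have "G \<subseteq> ?G'" using GF F F1E F2E by auto
        hence "?G' = G \<or> ?G' = U" using Gmax[OF fl'] by auto
        thus ?thesis
        proof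
          assume "?G' = G" hence "?G' \<inter> E2 = G \<inter> E2" by simp
          thus ?thesis using e2 F2_def by auto
        next
          assume "?G' = U" hence "?G' \<inter> E1 = E1" by auto
          hence "T \<subseteq> F1" using e1 TE1 by auto
          thus ?thesis using nT1 by auto
        qed
      next
        case b
        let ?G' = "E1 \<union> F"
        have e2: "?G' \<inter> E2 = F" using FE b TI by auto
        have e1: "?G' \<inter> E1 = E1" by auto
        have fl': "is_flat U IP ?G'" by (rule flatP_intro) (use e1 e2 F A.flat_E FE in auto)
        have "G \<subseteq> ?G'" using GF F F1E F2E by auto
        hence "?G' = G \<or> ?G' = U" using Gmax[OF fl'] by auto
        thus ?thesis
        proof
          assume "?G' = G" hence "T \<subseteq> G" using TE1 by auto
          thus ?thesis using nT1 F1_def TE1 by auto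
        next
          assume "?G' = U" hence "?G' \<inter> E2 = E2" by auto
          thus ?thesis using e2 by auto
        qed
      qed
    qed
    show ?thesis using h1 h2 s x2 GF by blast
  qed
qed


lemma symd: assumes "H1 \<subseteq> E1" "H2 \<subseteq> E2" "H1 \<inter> T = {x}" "H2 \<inter> T = {x}"
  shows "EM - (H1 \<union> H2) = symdiff (E1 - H1) (E2 - H2)"
proof -
  have "x \<in> H1" "x \<in> H2" using assms by auto
  thus ?thesis unfolding symdiff_def EM_def using assms TI by blast
qed

lemma part1: assumes c: "cocircuit EM IM C"
  shows "(cocircuit E1 I1 C \<and> C \<inter> T = {}) \<or> (cocircuit E2 I2 C \<and> C \<inter> T = {}) \<or>
        (\<exists>C1 C2. cocircuit E1 I1 C1 \<and> cocircuit E2 I2 C2 \<and> C1 \<inter> T = C2 \<inter> T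
                 \<and> card (C1 \<inter> T) = 2 \<and> C = symdiff C1 C2)"
proof -
  have CE: "C \<subseteq> EM" using c unfolding cocircuit_def circuit_def by auto
  have hK: "hyp EM IM (EM - C)" using c M.cocircuit_hyp[OF CE] by auto
  define G where "G = clo U IP (EM - C)"
  have hG: "hyp U IP G" and eG: "G - T = EM - C" using hypM_elim[OF hK] unfolding G_def by auto
  have CG: "C = EM - G" using eG CE EMT by auto
  have CT: "C \<inter> T = {}" using CE EMT by auto
  have "(\<exists>H2. hyp E2 I2 H2 \<and> T \<subseteq> H2 \<and> G = E1 \<union> H2) \<or> (\<exists>H1. hyp E1 I1 H1 \<and> T \<subseteq> H1 \<and> G = H1 \<union> E2)
       \<or> (\<exists>x H1 H2. hyp E1 I1 H1 \<and> hyp E2 I2 H2 \<and> H1 \<inter> T = {x} \<and> H2 \<inter> T = {x} \<and> G = H1 \<union> H2)"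
    by (rule classify[OF hG])
  thus ?thesis
  proof (elim disjE exE conjE)
    fix H2 assume h: "hyp E2 I2 H2" "T \<subseteq> H2" "G = E1 \<union> H2"
    have HE: "H2 \<subseteq> E2" using h unfolding hyp_def is_flat_def by auto
    have e: "C = E2 - H2" using CG h HE TI unfolding EM_def by auto
    have "E2 - (E2 - H2) = H2" using HE by auto
    hence "cocircuit E2 I2 C" using B.cocircuit_hyp[of "E2 - H2"] h(1) e by auto
    thus ?thesis using CT by auto
  next
    fix H1 assume h: "hyp E1 I1 H1" "T \<subseteq> H1" "G = H1 \<union> E2"
    have HE: "H1 \<subseteq> E1" using h unfolding hyp_def is_flat_def by auto
    have e: "C = E1 - H1" using CG h HE TI unfolding EM_def by auto
    have "E1 - (E1 - H1) = H1" using HE by auto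
    hence "cocircuit E1 I1 C" using A.cocircuit_hyp[of "E1 - H1"] h(1) e by auto
    thus ?thesis using CT by auto
  next
    fix x H1 H2 assume h: "hyp E1 I1 H1" "hyp E2 I2 H2" "H1 \<inter> T = {x}" "H2 \<inter> T = {x}" "G = H1 \<union> H2"
    have H1E: "H1 \<subseteq> E1" using h unfolding hyp_def is_flat_def by auto
    have H2E: "H2 \<subseteq> E2" using h unfolding hyp_def is_flat_def by auto
    have "E1 - (E1 - H1) = H1" using H1E by auto
    hence c1: "cocircuit E1 I1 (E1 - H1)" using A.cocircuit_hyp[of "E1 - H1"] h(1) by auto
    have "E2 - (E2 - H2) = H2" using H2E by auto
    hence c2: "cocircuit E2 I2 (E2 - H2)" using B.cocircuit_hyp[of "E2 - H2"] h(2) by auto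
    have xT: "x \<in> T" using h(3) by auto
    have t1: "(E1 - H1) \<inter> T = T - {x}" using h(3) TE1 by auto
    have t2: "(E2 - H2) \<inter> T = T - {x}" using h(4) TE2 by auto
    have card2: "card (T - {x}) = 2" using cT xT finT by (simp add: card_Diff_singleton)
    have "C = symdiff (E1 - H1) (E2 - H2)" using CG h(5) symd[OF H1E H2E h(3) h(4)] by simp
    thus ?thesis using c1 c2 t1 t2 card2 by metis
  qed
qed

lemma part2a1: assumes c: "cocircuit E1 I1 C" and CT: "C \<inter> T = {}" shows "cocircuit EM IM C"
proof -
  have CE1: "C \<subseteq> E1" using c unfolding cocircuit_def circuit_def by auto
  have CEM: "C \<subseteq> EM" using CE1 CT unfolding EM_def by auto
  define H1 where "H1 = E1 - C"
  have h1: "hyp E1 I1 H1" using c A.cocircuit_hyp[OF CE1] unfolding H1_def by auto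
  have TH: "T \<subseteq> H1" using CT TE1 unfolding H1_def by auto
  define G where "G = H1 \<union> E2"
  have hG: "hyp U IP G" unfolding G_def by (rule buildA1[OF h1 TH])
  define K where "K = EM - C"
  have KG: "K = G - T" unfolding K_def G_def H1_def EM_def using CE1 CT TI by auto
  have KU: "K \<subseteq> U" using KG hG unfolding hyp_def is_flat_def by auto
  have Gf: "is_flat U IP G" using hG unfolding hyp_def by auto
  have "clo U IP K = G"
  proof
    show "clo U IP K \<subseteq> G" using P.cl_least[OF Gf] KG by auto
    have "E2 - T \<subseteq> K" unfolding KG G_def by auto
    hence "clo U IP (E2 - T) \<subseteq> clo U IP K" by (rule P.cl_mono)
    hence "T \<subseteq> clo U IP K" using NT2 by auto
    moreover have "K \<subseteq> clo U IP K" by (rule P.cl_sub[OF KU])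
    ultimately show "G \<subseteq> clo U IP K" using KG by auto
  qed
  hence "hyp EM IM K" using hypM_intro[of K] hG KG unfolding K_def by auto
  moreover have "EM - (EM - C) = C" using CEM by auto
  ultimately show ?thesis using M.cocircuit_hyp[OF CEM] unfolding K_def by auto
qed

lemma part2a2: assumes c: "cocircuit E2 I2 C" and CT: "C \<inter> T = {}" shows "cocircuit EM IM C"
proof -
  have CE2: "C \<subseteq> E2" using c unfolding cocircuit_def circuit_def by auto
  have CEM: "C \<subseteq> EM" using CE2 CT unfolding EM_def by auto
  define H2 where "H2 = E2 - C"
  have h2: "hyp E2 I2 H2" using c B.cocircuit_hyp[OF CE2] unfolding H2_def by auto
  have TH: "T \<subseteq> H2" using CT TE2 unfolding H2_def by auto
  define G where "G = E1 \<union> H2"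
  have hG: "hyp U IP G" unfolding G_def by (rule buildA2[OF h2 TH])
  define K where "K = EM - C"
  have KG: "K = G - T" unfolding K_def G_def H2_def EM_def using CE2 CT TI by auto
  have KU: "K \<subseteq> U" using KG hG unfolding hyp_def is_flat_def by auto
  have Gf: "is_flat U IP G" using hG unfolding hyp_def by auto
  have "clo U IP K = G"
  proof
    show "clo U IP K \<subseteq> G" using P.cl_least[OF Gf] KG by auto
    have "E1 - T \<subseteq> K" unfolding KG G_def by auto
    hence "clo U IP (E1 - T) \<subseteq> clo U IP K" by (rule P.cl_mono)
    hence "T \<subseteq> clo U IP K" using NT1 by auto
    moreover have "K \<subseteq> clo U IP K" by (rule P.cl_sub[OF KU])
    ultimately show "G \<subseteq> clo U IP K" using KG by auto
  qed
  hence "hyp EM IM K" using hypM_intro[of K] hG KG unfolding K_def by auto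
  moreover have "EM - (EM - C) = C" using CEM by auto
  ultimately show ?thesis using M.cocircuit_hyp[OF CEM] unfolding K_def by auto
qed


lemma part2b: assumes c1: "cocircuit E1 I1 C1" and c2: "cocircuit E2 I2 C2" and eq: "C1 \<inter> T = C2 \<inter> T"
  and card2: "card (C1 \<inter> T) = 2"
  shows "cocircuit EM IM (symdiff C1 C2) \<or>
        (\<exists>R Q. cocircuit EM IM R \<and> cocircuit EM IM Q \<and> R \<inter> Q = {}
               \<and> symdiff C1 C2 = R \<union> Q
               \<and> R \<inter> E1 \<noteq> {} \<and> R \<inter> E2 \<noteq> {} \<and> Q \<inter> E1 \<noteq> {} \<and> Q \<inter> E2 \<noteq> {})"
proof -
  have CE1: "C1 \<subseteq> E1" using c1 unfolding cocircuit_def circuit_def by auto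
  have CE2: "C2 \<subseteq> E2" using c2 unfolding cocircuit_def circuit_def by auto
  define H1 where "H1 = E1 - C1"
  define H2 where "H2 = E2 - C2"
  have h1: "hyp E1 I1 H1" using c1 A.cocircuit_hyp[OF CE1] unfolding H1_def by auto
  have h2: "hyp E2 I2 H2" using c2 B.cocircuit_hyp[OF CE2] unfolding H2_def by auto
  have H1E: "H1 \<subseteq> E1" and H2E: "H2 \<subseteq> E2" unfolding H1_def H2_def by auto
  have C1H: "C1 = E1 - H1" and C2H: "C2 = E2 - H2" using CE1 CE2 unfolding H1_def H2_def by auto
  have "card (T - C1) = card T - card (T \<inter> C1)" by (rule card_Diff_subset_Int) (use finT in auto)
  hence "card (T - C1) = 1" using cT card2 by (simp add: Int_commute)
  then obtain x where x: "T - C1 = {x}" using card_1_singleton_iff[of "T - C1"] by auto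
  have xT: "x \<in> T" using x by auto
  have x1: "H1 \<inter> T = {x}" using x TE1 unfolding H1_def by auto
  have "T - C2 = T - C1" using eq by auto
  hence x2: "H2 \<inter> T = {x}" using x TE2 unfolding H2_def by auto
  define H where "H = H1 \<union> H2"
  have hH: "hyp U IP H" unfolding H_def by (rule buildB[OF h1 h2 x1 x2])
  have Hf: "is_flat U IP H" using hH unfolding hyp_def by auto
  have HU: "H \<subseteq> U" using Hf flatU by auto
  have HT: "H \<inter> T = {x}" using x1 x2 unfolding H_def by auto
  define K where "K = H - T"
  have KU: "K \<subseteq> U" and KEM: "K \<subseteq> EM" and KT: "K \<inter> T = {}" using HU unfolding K_def EM_def by auto
  have HK: "H = insert x K" using HT unfolding K_def by auto
  have sd: "symdiff C1 C2 = EM - K"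
  proof -
    have "EM - K = EM - H" unfolding K_def EM_def by auto
    also have "\<dots> = symdiff C1 C2" unfolding H_def C1H C2H by (rule symd[OF H1E H2E x1 x2])
    finally show ?thesis by simp
  qed
  have clKH: "clo U IP K \<subseteq> H" using P.cl_least[OF Hf] unfolding K_def by auto
  have KclK: "K \<subseteq> clo U IP K" by (rule P.cl_sub[OF KU])
  show ?thesis
  proof (cases "x \<in> clo U IP K")
    case True
    have "clo U IP K = H" using clKH KclK True HK by auto
    hence "hyp EM IM K" using hypM_intro[OF KEM] hH unfolding K_def by auto
    moreover have "EM - (EM - K) = K" using KEM by auto
    ultimately have "cocircuit EM IM (EM - K)" using M.cocircuit_hyp[of "EM - K"] by auto
    thus ?thesis using sd by auto
  next
    case False
    have clK: "clo U IP K = K"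
    proof -
      have "clo U IP K \<inter> T \<subseteq> {x}" using clKH HT by auto
      hence "clo U IP K \<inter> T = {}" using False by auto
      hence "clo U IP K \<subseteq> K" using clKH unfolding K_def by auto
      thus ?thesis using KclK by auto
    qed
    have Kf: "is_flat U IP K" using P.cl_flat[OF KU] clK by simp
    have xU: "x \<in> U" using xT TU by auto
    have rKx: "rk IP (insert x K) = Suc (rk IP K)"
    proof -
      have "rk IP (insert x K) \<noteq> rk IP K" using False P.cl_iff xU by auto
      moreover have "rk IP K \<le> rk IP (insert x K)" by (rule P.rk_mono) auto
      ultimately show ?thesis using P.rk_insert[of x K] by auto
    qed
    have rU: "rk IP U = Suc (Suc (rk IP K))" using hH rKx HK unfolding hyp_def by auto
    have hy: "hyp U IP (clo U IP (insert y K))" if y: "y \<in> U" "y \<notin> K" for y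
    proof -
      have iU: "insert y K \<subseteq> U" using y KU by auto
      have "rk IP (insert y K) \<noteq> rk IP K" using y clK P.cl_iff[of y K] by auto
      moreover have "rk IP K \<le> rk IP (insert y K)" by (rule P.rk_mono) auto
      ultimately have "rk IP (insert y K) = Suc (rk IP K)" using P.rk_insert[of y K] by auto
      hence "Suc (rk IP (clo U IP (insert y K))) = rk IP U" using P.rk_cl[OF iU] rU by auto
      thus ?thesis unfolding hyp_def using P.cl_flat[OF iU] by auto
    qed
    have ysub: "insert y K \<subseteq> clo U IP (insert y K)" if "y \<in> U" for y
      by (rule P.cl_sub) (use that KU in auto)
    have rkG: "rk IP G = Suc (rk IP K)" if "hyp U IP G" for G using that rU unfolding hyp_def by auto
    obtain a b where ab: "T - {x} = {a, b}" "a \<noteq> b"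
    proof -
      have "card (T - {x}) = 2" using cT xT finT by (simp add: card_Diff_singleton)
      thus ?thesis using that card_2_iff by metis
    qed
    have aT: "a \<in> T" "b \<in> T" "a \<noteq> x" "b \<noteq> x" using ab by auto
    have aU: "a \<in> U" "b \<in> U" using aT TU by auto
    have aK: "a \<notin> K" "b \<notin> K" using aT KT by auto
    define Ga where "Ga = clo U IP (insert a K)"
    define Gb where "Gb = clo U IP (insert b K)"
    have hGa: "hyp U IP Ga" unfolding Ga_def using hy aU aK by auto
    have hGb: "hyp U IP Gb" unfolding Gb_def using hy aU aK by auto
    have Gaf: "is_flat U IP Ga" and Gbf: "is_flat U IP Gb" using hGa hGb unfolding hyp_def by auto
    have sGa: "insert a K \<subseteq> Ga" unfolding Ga_def using ysub aU by auto
    have sGb: "insert b K \<subseteq> Gb" unfolding Gb_def using ysub aU by auto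
    have xnot: "x \<notin> G" if hG: "hyp U IP G" and sG: "insert c K \<subseteq> G" and cT: "c \<in> T" "c \<noteq> x" for G c
    proof
      assume "x \<in> G"
      hence "H \<subseteq> G" using HK sG by auto
      hence "H = G" using P.hyp_eq[OF hH hG] by auto
      thus False using sG cT HT by auto
    qed
    have xGa: "x \<notin> Ga" using xnot[OF hGa sGa] aT by auto
    have xGb: "x \<notin> Gb" using xnot[OF hGb sGb] aT by auto
    have pair: "\<not> {a, b} \<subseteq> G" if "is_flat U IP G" "x \<notin> G" for G
    proof
      assume ab2: "{a, b} \<subseteq> G"
      have "is_flat E1 I1 (G \<inter> E1)" using that Lf by blast
      moreover have "T - {x} \<subseteq> G \<inter> E1" using ab ab2 TE1 by auto
      ultimately have "x \<in> G \<inter> E1" using A.circuit_flat[OF circ1 xT] by blast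
      thus False using that by auto
    qed
    have bGa: "b \<notin> Ga" using pair[OF Gaf xGa] sGa by auto
    have aGb: "a \<notin> Gb" using pair[OF Gbf xGb] sGb by auto
    have Tab: "T = {x, a, b}" using ab xT by auto
    have cov: "EM \<subseteq> Ga \<union> Gb"
    proof
      fix y assume yE: "y \<in> EM"
      show "y \<in> Ga \<union> Gb"
      proof (cases "y \<in> K")
        case True thus ?thesis using sGa by auto
      next
        case False
        have yU: "y \<in> U" using yE EMU by auto
        define Gy where "Gy = clo U IP (insert y K)"
        have hGy: "hyp U IP Gy" unfolding Gy_def using hy yU False by auto
        have Gyf: "is_flat U IP Gy" using hGy unfolding hyp_def by auto
        have sGy: "insert y K \<subseteq> Gy" unfolding Gy_def using ysub yU by auto
        obtain s where s: "s \<in> Gy" "s \<in> T" using noCP[OF hGy] by auto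
        have "s = x \<or> s = a \<or> s = b" using s Tab by auto
        thus ?thesis
        proof (elim disjE)
          assume "s = x"
          hence "H \<subseteq> Gy" using HK sGy s by auto
          hence "H = Gy" using P.hyp_eq[OF hH hGy] by auto
          hence "y \<in> H" using sGy by auto
          thus ?thesis using yE False EMT unfolding K_def by auto
        next
          assume "s = a"
          hence "insert a K \<subseteq> Gy" using sGy s by auto
          hence "Ga \<subseteq> Gy" unfolding Ga_def using P.cl_least[OF Gyf] by auto
          hence "Ga = Gy" using P.hyp_eq[OF hGa hGy] by auto
          thus ?thesis using sGy by auto
        next
          assume "s = b"
          hence "insert b K \<subseteq> Gy" using sGy s by auto
          hence "Gb \<subseteq> Gy" unfolding Gb_def using P.cl_least[OF Gyf] by auto
          hence "Gb = Gy" using P.hyp_eq[OF hGb hGy] by auto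
          thus ?thesis using sGy by auto
        qed
      qed
    qed
    have inter: "Ga \<inter> Gb = K"
    proof (rule ccontr)
      assume ne: "Ga \<inter> Gb \<noteq> K"
      have fI: "is_flat U IP (Ga \<inter> Gb)" by (rule P.flat_inter[OF Gaf Gbf])
      have "K \<subseteq> Ga \<inter> Gb" using sGa sGb by auto
      hence "rk IP K < rk IP (Ga \<inter> Gb)" using P.flat_less[OF Kf fI] ne by auto
      moreover have "rk IP (Ga \<inter> Gb) \<le> rk IP Ga" by (rule P.rk_mono) auto
      ultimately have "rk IP (Ga \<inter> Gb) = rk IP Ga" using rkG[OF hGa] by auto
      hence "Ga \<inter> Gb = Ga" using P.flat_less[OF fI Gaf] by fastforce
      thus False using sGa aGb by auto
    qed
    have meet: "(EM - G) \<inter> E1 \<noteq> {} \<and> (EM - G) \<inter> E2 \<noteq> {}" if "is_flat U IP G" "x \<notin> G" for G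
    proof (intro conjI notI)
      assume "(EM - G) \<inter> E1 = {}"
      hence "E1 - T \<subseteq> G \<inter> E1" unfolding EM_def by auto
      moreover have "is_flat E1 I1 (G \<inter> E1)" using that Lf by blast
      ultimately have "T \<subseteq> G \<inter> E1" using N1 by blast
      thus False using that xT by auto
    next
      assume "(EM - G) \<inter> E2 = {}"
      hence "E2 - T \<subseteq> G \<inter> E2" unfolding EM_def by auto
      moreover have "is_flat E2 I2 (G \<inter> E2)" using that Lf by blast
      ultimately have "T \<subseteq> G \<inter> E2" using N2 by blast
      thus False using that xT by auto
    qed
    have cocG: "cocircuit EM IM (EM - G)"
      if hG: "hyp U IP G" and GT: "G \<inter> T = {c}" and KG: "K \<subseteq> G" and Gf': "is_flat U IP G'"
         and xG': "x \<notin> G'" and KG': "K \<subseteq> G'" and cv: "EM \<subseteq> G \<union> G'" for G G' c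
    proof -
      have Gf: "is_flat U IP G" using hG unfolding hyp_def by auto
      have GU: "G \<subseteq> U" using Gf flatU by auto
      define Z where "Z = clo U IP (G - T)"
      have ZG: "Z \<subseteq> G" unfolding Z_def using P.cl_least[OF Gf] by auto
      have GZ: "G - T \<subseteq> Z" unfolding Z_def by (rule P.cl_sub) (use GU in auto)
      have cZ: "c \<in> Z"
      proof (rule ccontr)
        assume cn: "c \<notin> Z"
        hence Zeq: "Z = G - T" using ZG GZ GT by auto
        have Zf: "is_flat U IP Z" unfolding Z_def by (rule P.cl_flat) (use GU in auto)
        have KZ: "K \<subseteq> Z" using Zeq KG KT by auto
        have "Z = K"
        proof (rule ccontr)
          assume "Z \<noteq> K"
          hence "rk IP K < rk IP Z" using P.flat_less[OF Kf Zf KZ] by auto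
          moreover have "rk IP Z \<le> rk IP G" using ZG by (rule P.rk_mono)
          ultimately have "rk IP Z = rk IP G" using rkG[OF hG] by auto
          hence "Z = G" using P.flat_less[OF Zf Gf ZG] by fastforce
          thus False using cn GT by auto
        qed
        hence "G \<subseteq> insert c K" using Zeq GT by auto
        hence "E1 - T \<subseteq> G'" using cv KG' GT unfolding EM_def by auto
        hence "(EM - G') \<inter> E1 = {}" unfolding EM_def by auto
        thus False using meet[OF Gf' xG'] by auto
      qed
      have "Z = G" using ZG GZ cZ GT by auto
      hence hZ: "hyp EM IM (G - T)" using hypM_intro[of "G - T"] hG GU unfolding Z_def EM_def by auto
      have GEM: "G - T \<subseteq> EM" using GU unfolding EM_def by auto
      have e1: "EM - (EM - (G - T)) = G - T" using GEM by auto
      have "cocircuit EM IM (EM - (G - T))" using M.cocircuit_hyp[of "EM - (G - T)"] hZ unfolding e1 by auto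
      moreover have "EM - (G - T) = EM - G" unfolding EM_def by auto
      ultimately show ?thesis by simp
    qed
    have GaT: "Ga \<inter> T = {a}" using Tab sGa xGa bGa by auto
    have GbT: "Gb \<inter> T = {b}" using Tab sGb xGb aGb by auto
    have cR: "cocircuit EM IM (EM - Gb)"
      by (rule cocG[OF hGb GbT _ Gaf xGa]) (use sGa sGb cov in auto)
    have cQ: "cocircuit EM IM (EM - Ga)"
      by (rule cocG[OF hGa GaT _ Gbf xGb]) (use sGa sGb cov in auto)
    have disj: "(EM - Gb) \<inter> (EM - Ga) = {}" using cov by auto
    have un: "symdiff C1 C2 = (EM - Gb) \<union> (EM - Ga)" using sd inter by auto
    show ?thesis using cR cQ disj un meet[OF Gaf xGa] meet[OF Gbf xGb] by blast
  qed
qed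

end


theorem corollary3p6:
  fixes E1 E2 T :: "'a set" and I1 I2 IP :: "'a set \<Rightarrow> bool"
  assumes M1: "matroid E1 I1" "binary E1 I1"
      and M2: "matroid E2 I2" "binary E2 I2"
      and T: "T = E1 \<inter> E2" "triangle E1 I1 T" "triangle E2 I2 T"
      and nococ: "\<forall>C. C \<subseteq> T \<longrightarrow> \<not> cocircuit E1 I1 C \<and> \<not> cocircuit E2 I2 C"
      and P: "matroid (E1 \<union> E2) IP"
      and P_flats: "\<forall>F. is_flat (E1 \<union> E2) IP F \<longleftrightarrow>
                        F \<subseteq> E1 \<union> E2 \<and> is_flat E1 I1 (F \<inter> E1) \<and> is_flat E2 I2 (F \<inter> E2)"
  defines "E \<equiv> (E1 \<union> E2) - T"
      and "I \<equiv> delete_indep IP T"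
  shows
   "(\<forall>C. cocircuit E I C \<longrightarrow>
        (cocircuit E1 I1 C \<and> C \<inter> T = {}) \<or> (cocircuit E2 I2 C \<and> C \<inter> T = {}) \<or>
        (\<exists>C1 C2. cocircuit E1 I1 C1 \<and> cocircuit E2 I2 C2 \<and> C1 \<inter> T = C2 \<inter> T
                 \<and> card (C1 \<inter> T) = 2 \<and> C = symdiff C1 C2))
    \<and> (\<forall>C. (cocircuit E1 I1 C \<or> cocircuit E2 I2 C) \<and> C \<inter> T = {} \<longrightarrow> cocircuit E I C)
    \<and> (\<forall>C1 C2. cocircuit E1 I1 C1 \<and> cocircuit E2 I2 C2 \<and> C1 \<inter> T = C2 \<inter> T
                 \<and> card (C1 \<inter> T) = 2 \<longrightarrow>
        cocircuit E I (symdiff C1 C2) \<or>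
        (\<exists>R Q. cocircuit E I R \<and> cocircuit E I Q \<and> R \<inter> Q = {}
               \<and> symdiff C1 C2 = R \<union> Q
               \<and> R \<inter> E1 \<noteq> {} \<and> R \<inter> E2 \<noteq> {} \<and> Q \<inter> E1 \<noteq> {} \<and> Q \<inter> E2 \<noteq> {}))"
  proof -
  interpret psum E1 E2 T I1 I2 IP by (rule psum.intro[OF M1 M2 T nococ P P_flats])
  have EE: "E = EM" by (simp add: E_def EM_def)
  have II: "I = IM" by (simp add: I_def IM_def)
  have p1: "\<forall>C. cocircuit E I C \<longrightarrow>
        (cocircuit E1 I1 C \<and> C \<inter> T = {}) \<or> (cocircuit E2 I2 C \<and> C \<inter> T = {}) \<or>
        (\<exists>C1 C2. cocircuit E1 I1 C1 \<and> cocircuit E2 I2 C2 \<and> C1 \<inter> T = C2 \<inter> T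
                 \<and> card (C1 \<inter> T) = 2 \<and> C = symdiff C1 C2)"
    unfolding EE II using part1 by blast
  have p2: "\<forall>C. (cocircuit E1 I1 C \<or> cocircuit E2 I2 C) \<and> C \<inter> T = {} \<longrightarrow> cocircuit E I C"
    unfolding EE II using part2a1 part2a2 by blast
  have p3: "\<forall>C1 C2. cocircuit E1 I1 C1 \<and> cocircuit E2 I2 C2 \<and> C1 \<inter> T = C2 \<inter> T
                 \<and> card (C1 \<inter> T) = 2 \<longrightarrow>
        cocircuit E I (symdiff C1 C2) \<or>
        (\<exists>R Q. cocircuit E I R \<and> cocircuit E I Q \<and> R \<inter> Q = {}
               \<and> symdiff C1 C2 = R \<union> Q
               \<and> R \<inter> E1 \<noteq> {} \<and> R \<inter> E2 \<noteq> {} \<and> Q \<inter> E1 \<noteq> {} \<and> Q \<inter> E2 \<noteq> {})"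
    unfolding EE II
  proof (intro allI impI)
    fix C1 C2 assume A: "cocircuit E1 I1 C1 \<and> cocircuit E2 I2 C2 \<and> C1 \<inter> T = C2 \<inter> T \<and> card (C1 \<inter> T) = 2"
    show "cocircuit EM IM (symdiff C1 C2) \<or>
        (\<exists>R Q. cocircuit EM IM R \<and> cocircuit EM IM Q \<and> R \<inter> Q = {}
               \<and> symdiff C1 C2 = R \<union> Q
               \<and> R \<inter> E1 \<noteq> {} \<and> R \<inter> E2 \<noteq> {} \<and> Q \<inter> E1 \<noteq> {} \<and> Q \<inter> E2 \<noteq> {})"
      using part2b A by blast
  qed
  show ?thesis using p1 p2 p3 by blast
qed

end
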